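(* Let $\eta\in(0,1]$, $p\in[1,2)$ with $(1+\eta)/p>1$, and let $A\in C^{p\text{-}\mathrm{var}}_tC^{\eta,\mathrm{loc}}_x$. Suppose that the nonlinear Young differential equation $x_t=\int_0^tA_{\mathrm ds}(x_s)$ admits a semiflow $\Psi$ which is locally $\beta$-Hölder continuous for every $\beta\in(0,1)$. Then for any $0\le S\le T\le1$ and $y\in\mathbb R^d$ there exists a unique solution to the nonlinear Young equation on $[S,T]$ with initial condition $y$, namely $z_t=\Psi_{S\to t}(y)$.
   Context: $C^{\eta,\mathrm{loc}}_x$: locally $\eta$-Hölder functions $\mathbb R^d\to\mathbb R^d$ (with its Fréchet topology of local Hölder seminorms); $C^{p\text{-}\mathrm{var}}_tE$: continuous paths $[0,1]\to E$ of finite $p$-variation. Nonlinear Young integral: for $A\in C^{p\text{-}\mathrm{var}}_tC^{\eta,\mathrm{loc}}_x$ and $x\in C^{\zeta\text{-}\mathrm{var}}_t$ with $1/p+\eta/\zeta>1$, $\int_s^tA_{\mathrm dr}(x_r)=\lim_{\ell\to\infty}\sum_{j=0}^{2^\ell-1}(A_{t_{j+1}}-A_{t_j})(x_{t_j})$, $t_j=s+j2^{-\ell}(t-s)$. A solution on $[S,T]$ with initial condition $y$ is a path $z\in C^{\zeta\text{-}\mathrm{var}}([S,T])$ for some $\zeta$ with $1/p+\eta/\zeta>1$ such that $z_t=y+\int_S^tA_{\mathrm dr}(z_r)$ for all $t\in[S,T]$. A semiflow is a jointly measurable $\Psi:\{0\le s\le t\le1\}\times\mathbb R^d\to\mathbb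 R^d$ such that for all $(s,x)$, $\Psi_{s\to\cdot}(x)\in C^{p\text{-}\mathrm{var}}$ and $\Psi_{s\to t}(x)=x+\int_s^tA_{\mathrm dr}(\Psi_{s\to r}(x))$ for $t\in[s,1]$, and $\Psi_{s\to t}=\Psi_{r\to t}\circ\Psi_{s\to r}$ for $s\le r\le t$; it is locally $\beta$-Hölder if for each $K$ there is $N$ with $|\Psi_{s\to t}(x)-\Psi_{s\to t}(y)|\le N|x-y|^\beta$ for all $s\le t$, $x,y\in B_K$. *)

theory Defs
  imports "HOL-Analysis.Analysis"
begin

definition loc_holder_norm :: "real \<Rightarrow> real \<Rightarrow> ('a::euclidean_space \<Rightarrow> 'a) \<Rightarrow> real" where
  "loc_holder_norm K \<eta> g =
     (SUP x \<in> cball 0 K. norm (g x)) +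
     (SUP xy \<in> {(x, y). x \<in> cball 0 K \<and> y \<in> cball 0 K \<and> x \<noteq> y}.
        norm (g (fst xy) - g (snd xy)) / norm (fst xy - snd xy) powr \<eta>)"

definition loc_holder :: "real \<Rightarrow> ('a::euclidean_space \<Rightarrow> 'a) \<Rightarrow> bool" where
  "loc_holder \<eta> g \<longleftrightarrow> (\<forall>K>0. \<exists>C. \<forall>x\<in>cball 0 K. \<forall>y\<in>cball 0 K.
      norm (g x - g y) \<le> C * norm (x - y) powr \<eta>)"

definition finite_pvar :: "('b \<Rightarrow> 'b \<Rightarrow> real) \<Rightarrow> real \<Rightarrow> real \<Rightarrow> real \<Rightarrow> (real \<Rightarrow> 'b) \<Rightarrow> bool" where
  "finite_pvar \<delta> p a b f \<longleftrightarrow> (\<exists>M. \<forall>(n::nat) (t::nat \<Rightarrow> real).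
      t 0 = a \<and> t n = b \<and> (\<forall>i<n. t i \<le> t (Suc i)) \<longrightarrow>
      (\<Sum>i<n. \<delta> (f (t (Suc i))) (f (t i)) powr p) \<le> M)"

definition pvar_path :: "real \<Rightarrow> real \<Rightarrow> real \<Rightarrow> (real \<Rightarrow> 'a::euclidean_space) \<Rightarrow> bool" where
  "pvar_path p a b x \<longleftrightarrow> continuous_on {a..b} x \<and> finite_pvar dist p a b x"

text \<open>A in C^{p-var}_t C^{eta,loc}_x on [0,1]: values locally eta-Hoelder, continuous and of
  finite p-variation with respect to every local seminorm of the Frechet space.\<close>
definition pvar_field :: "real \<Rightarrow> real \<Rightarrow> (real \<Rightarrow> 'a::euclidean_space \<Rightarrow> 'a) \<Rightarrow> bool" where
  "pvar_field p \<eta> A \<longleftrightarrow>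
     (\<forall>t\<in>{0..1}. loc_holder \<eta> (A t)) \<and>
     (\<forall>K>0. (\<forall>t\<in>{0..1}. ((\<lambda>s. loc_holder_norm K \<eta> (\<lambda>z. A s z - A t z)) \<longlongrightarrow> 0)
                                 (at t within {0..1})) \<and>
            finite_pvar (\<lambda>g h. loc_holder_norm K \<eta> (\<lambda>z. g z - h z)) p 0 1 A)"

definition nyi_sum :: "(real \<Rightarrow> 'a::euclidean_space \<Rightarrow> 'a) \<Rightarrow> (real \<Rightarrow> 'a) \<Rightarrow> real \<Rightarrow> real \<Rightarrow> nat \<Rightarrow> 'a" where
  "nyi_sum A x s t l =
     (\<Sum>j<2^l. let tj = s + real j / 2^l * (t - s); tj' = s + real (Suc j) / 2^l * (t - s)
               in A tj' (x tj) - A tj (x tj))"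

definition has_nyi :: "(real \<Rightarrow> 'a::euclidean_space \<Rightarrow> 'a) \<Rightarrow> (real \<Rightarrow> 'a) \<Rightarrow> real \<Rightarrow> real \<Rightarrow> 'a \<Rightarrow> bool" where
  "has_nyi A x s t I \<longleftrightarrow> nyi_sum A x s t \<longlonglongrightarrow> I"

definition is_nyi_solution :: "real \<Rightarrow> real \<Rightarrow> (real \<Rightarrow> 'a::euclidean_space \<Rightarrow> 'a) \<Rightarrow> real \<Rightarrow> real \<Rightarrow> 'a \<Rightarrow> (real \<Rightarrow> 'a) \<Rightarrow> bool" where
  "is_nyi_solution p \<eta> A S T y z \<longleftrightarrow>
     (\<exists>\<zeta>. \<zeta> \<ge> 1 \<and> 1/p + \<eta>/\<zeta> > 1 \<and> pvar_path \<zeta> S T z \<and>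
          (\<forall>t\<in>{S..T}. has_nyi A z S t (z t - y)))"

definition is_semiflow :: "real \<Rightarrow> (real \<Rightarrow> 'a::euclidean_space \<Rightarrow> 'a) \<Rightarrow> (real \<Rightarrow> real \<Rightarrow> 'a \<Rightarrow> 'a) \<Rightarrow> bool" where
  "is_semiflow p A \<Psi> \<longleftrightarrow>
     (\<lambda>(s, t, x). \<Psi> s t x) \<in> borel_measurable
        (restrict_space borel {(s, t, x). 0 \<le> s \<and> s \<le> t \<and> t \<le> 1}) \<and>
     (\<forall>s\<in>{0..1}. \<forall>x. pvar_path p s 1 (\<lambda>t. \<Psi> s t x) \<and>
         (\<forall>t\<in>{s..1}. has_nyi A (\<lambda>r. \<Psi> s r x) s t (\<Psi> s t x - x))) \<and>
     (\<forall>s r t. 0 \<le> s \<and> s \<le> r \<and> r \<le> t \<and> t \<le> 1 \<longrightarrow> \<Psi> s t = \<Psi> r t \<circ> \<Psi> s r)"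

definition semiflow_loc_holder :: "real \<Rightarrow> (real \<Rightarrow> real \<Rightarrow> 'a::euclidean_space \<Rightarrow> 'a) \<Rightarrow> bool" where
  "semiflow_loc_holder \<beta> \<Psi> \<longleftrightarrow> (\<forall>K. \<exists>N. \<forall>s t. 0 \<le> s \<and> s \<le> t \<and> t \<le> 1 \<longrightarrow>
      (\<forall>x\<in>cball 0 K. \<forall>y\<in>cball 0 K. norm (\<Psi> s t x - \<Psi> s t y) \<le> N * norm (x - y) powr \<beta>))"

end

theory Submission
  imports Defs
begin

definition nxt :: "real set \<Rightarrow> real \<Rightarrow> real" where
  "nxt P x = Min {y\<in>P. x < y}"

definition psum :: "(real \<Rightarrow> real \<Rightarrow> 'a::real_normed_vector) \<Rightarrow> real set \<Rightarrow> 'a" where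
  "psum Xi P = (\<Sum>x\<in>{x\<in>P. \<exists>y\<in>P. x < y}. Xi x (nxt P x))"

definition consec :: "real set \<Rightarrow> real \<Rightarrow> real \<Rightarrow> bool" where
  "consec P x y \<longleftrightarrow> x \<in> P \<and> y \<in> P \<and> x < y \<and> (\<forall>z\<in>P. \<not> (x < z \<and> z < y))"

lemma nxt_props:
  assumes "finite P" "y \<in> P" "x < y"
  shows "nxt P x \<in> P" "x < nxt P x" "\<And>z. z \<in> P \<Longrightarrow> x < z \<Longrightarrow> nxt P x \<le> z"
proof -
  have f: "finite {y\<in>P. x < y}" using assms by auto
  have ne: "{y\<in>P. x < y} \<noteq> {}" using assms by auto
  have "nxt P x \<in> {y\<in>P. x < y}" unfolding nxt_def using Min_in[OF f ne] .
  then show "nxt P x \<in> P" "x < nxt P x" by auto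
  show "\<And>z. z \<in> P \<Longrightarrow> x < z \<Longrightarrow> nxt P x \<le> z" unfolding nxt_def using f by auto
qed

lemma nxt_eqI:
  assumes "finite P" "y \<in> P" "x < y" "\<And>z. z \<in> P \<Longrightarrow> x < z \<Longrightarrow> y \<le> z"
  shows "nxt P x = y"
  using nxt_props[OF assms(1-3)] assms by force

lemma psum_split:
  assumes "finite P" "c \<in> P"
  shows "psum Xi P = psum Xi {x\<in>P. x \<le> c} + psum Xi {x\<in>P. c \<le> x}"
proof -
  let ?L = "{x\<in>P. x \<le> c}" and ?R = "{x\<in>P. c \<le> x}"
  have I: "{x\<in>P. \<exists>y\<in>P. x < y} = {x\<in>?L. \<exists>y\<in>?L. x < y} \<union> {x\<in>?R. \<exists>y\<in>?R. x < y}"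
  proof (rule set_eqI, rule iffI)
    fix x assume x: "x \<in> {x\<in>P. \<exists>y\<in>P. x < y}"
    then obtain y where y: "y \<in> P" "x < y" by auto
    show "x \<in> {x\<in>?L. \<exists>y\<in>?L. x < y} \<union> {x\<in>?R. \<exists>y\<in>?R. x < y}"
    proof (cases "x < c")
      case True then show ?thesis using x assms by auto
    next
      case False then show ?thesis using x y by auto
    qed
  qed auto
  have D: "{x\<in>?L. \<exists>y\<in>?L. x < y} \<inter> {x\<in>?R. \<exists>y\<in>?R. x < y} = {}" by auto
  have fin: "finite {x\<in>?L. \<exists>y\<in>?L. x < y}" "finite {x\<in>?R. \<exists>y\<in>?R. x < y}"
    using assms by auto
  have e1: "nxt P x = nxt ?L x" if "x \<in> {x\<in>?L. \<exists>y\<in>?L. x < y}" for x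
  proof -
    from that obtain y where y: "y \<in> ?L" "x < y" by auto
    have fL: "finite ?L" using assms by auto
    have a: "nxt ?L x \<in> ?L" "x < nxt ?L x" using nxt_props[OF fL y] by auto
    show ?thesis
    proof (rule nxt_eqI[OF assms(1)])
      show "nxt ?L x \<in> P" "x < nxt ?L x" using a by auto
      fix z assume z: "z \<in> P" "x < z"
      show "nxt ?L x \<le> z"
      proof (cases "z \<le> c")
        case True then show ?thesis using nxt_props(3)[OF fL y] z by auto
      next
        case False then show ?thesis using a by auto
      qed
    qed
  qed
  have e2: "nxt P x = nxt ?R x" if "x \<in> {x\<in>?R. \<exists>y\<in>?R. x < y}" for x
  proof -
    from that obtain y where y: "y \<in> ?R" "x < y" and xc: "c \<le> x" by auto
    have fR: "finite ?R" using assms by auto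
    have a: "nxt ?R x \<in> ?R" "x < nxt ?R x" using nxt_props[OF fR y] by auto
    show ?thesis
    proof (rule nxt_eqI[OF assms(1)])
      show "nxt ?R x \<in> P" "x < nxt ?R x" using a by auto
      fix z assume z: "z \<in> P" "x < z"
      then show "nxt ?R x \<le> z" using nxt_props(3)[OF fR y] xc by auto
    qed
  qed
  have "psum Xi P = (\<Sum>x\<in>{x\<in>?L. \<exists>y\<in>?L. x < y}. Xi x (nxt P x)) + (\<Sum>x\<in>{x\<in>?R. \<exists>y\<in>?R. x < y}. Xi x (nxt P x))"
    unfolding psum_def I using sum.union_disjoint[OF fin D] by simp
  also have "\<dots> = psum Xi ?L + psum Xi ?R"
  proof -
    have s1: "(\<Sum>x\<in>{x\<in>?L. \<exists>y\<in>?L. x < y}. Xi x (nxt P x)) = (\<Sum>x\<in>{x\<in>?L. \<exists>y\<in>?L. x < y}. Xi x (nxt ?L x))"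
      by (rule sum.cong[OF refl]) (simp only: e1)
    have s2: "(\<Sum>x\<in>{x\<in>?R. \<exists>y\<in>?R. x < y}. Xi x (nxt P x)) = (\<Sum>x\<in>{x\<in>?R. \<exists>y\<in>?R. x < y}. Xi x (nxt ?R x))"
      by (rule sum.cong[OF refl]) (simp only: e2)
    show ?thesis unfolding psum_def s1 s2 ..
  qed
  finally show ?thesis .
qed

lemma psum_single: "psum Xi {x} = 0"
proof -
  have "{z\<in>{x}. \<exists>y\<in>{x}. z < y} = {}" by auto
  then show ?thesis unfolding psum_def by (metis sum.empty)
qed

lemma psum_two:
  assumes "x < y" shows "psum Xi {x, y} = Xi x y"
proof -
  have "{z\<in>{x,y}. \<exists>w\<in>{x,y}. z < w} = {x}" using assms by auto
  moreover have "nxt {x,y} x = y" by (rule nxt_eqI) (use assms in auto)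
  ultimately show ?thesis unfolding psum_def by simp
qed

locale sewing =
  fixes Xi :: "real \<Rightarrow> real \<Rightarrow> 'a::real_normed_vector"
    and \<omega> :: "real \<Rightarrow> real \<Rightarrow> real" and a b \<theta> :: real
  assumes th: "\<theta> > 1"
    and om_nn: "\<And>u v. a \<le> u \<Longrightarrow> u \<le> v \<Longrightarrow> v \<le> b \<Longrightarrow> 0 \<le> \<omega> u v"
    and om_sup: "\<And>u m v. a \<le> u \<Longrightarrow> u \<le> m \<Longrightarrow> m \<le> v \<Longrightarrow> v \<le> b \<Longrightarrow> \<omega> u m + \<omega> m v \<le> \<omega> u v"
    and delta: "\<And>u m v. a \<le> u \<Longrightarrow> u \<le> m \<Longrightarrow> m \<le> v \<Longrightarrow> v \<le> b \<Longrightarrow>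
        norm (Xi u v - Xi u m - Xi m v) \<le> \<omega> u v powr \<theta>"
begin

definition Cs :: real where "Cs = 2 / (1 - 2 powr (1 - \<theta>))"

lemma Cs_pos: "Cs > 0" and Cs_eq: "Cs * 2 powr (1 - \<theta>) + 2 = Cs"
proof -
  have "2 powr (1 - \<theta>) < 2 powr 0" using th by (intro powr_less_mono) auto
  then have h: "2 powr (1 - \<theta>) < 1" by simp
  then show "Cs > 0" unfolding Cs_def by simp
  have "1 - 2 powr (1 - \<theta>) \<noteq> 0" using h by linarith
  then show "Cs * 2 powr (1 - \<theta>) + 2 = Cs" unfolding Cs_def using th by (simp add: field_simps)
qed

lemma om_zero: "a \<le> u \<Longrightarrow> u \<le> b \<Longrightarrow> \<omega> u u = 0"
  using om_sup[of u u u] om_nn[of u u] by auto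

lemma om_mono: "a \<le> u \<Longrightarrow> u \<le> u' \<Longrightarrow> u' \<le> v' \<Longrightarrow> v' \<le> v \<Longrightarrow> v \<le> b \<Longrightarrow> \<omega> u' v' \<le> \<omega> u v"
  using om_sup[of u u' v] om_sup[of u' v' v] om_nn[of u u'] om_nn[of v' v] by linarith

lemma Xi_zero: "a \<le> u \<Longrightarrow> u \<le> b \<Longrightarrow> Xi u u = 0"
  using delta[of u u u] om_zero[of u] th by auto

lemma maximal:
  "finite P \<Longrightarrow> P \<subseteq> {u..v} \<Longrightarrow> u \<in> P \<Longrightarrow> v \<in> P \<Longrightarrow> a \<le> u \<Longrightarrow> v \<le> b \<Longrightarrow>
    norm (psum Xi P - Xi u v) \<le> Cs * \<omega> u v powr \<theta>"
proof (induction "card P" arbitrary: P u v rule: less_induct)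
  case less
  note fin = less.prems(1) and sub = less.prems(2) and uP = less.prems(3) and vP = less.prems(4)
    and au = less.prems(5) and vb = less.prems(6)
  have uv: "u \<le> v" using sub uP by auto
  have rhs_nn: "0 \<le> Cs * \<omega> u v powr \<theta>" using Cs_pos by simp
  show ?case
  proof (cases "\<exists>z\<in>P. u < z \<and> z < v")
    case False
    show ?thesis
    proof (cases "u = v")
      case True
      then have "P = {u}" using sub uP by auto
      then show ?thesis using True Xi_zero[of u] au vb rhs_nn by (simp add: psum_single)
    next
      case uv': False
      then have "P = {u, v}" using sub uP vP False by force
      then show ?thesis using psum_two[of u v Xi] uv uv' rhs_nn by simp
    qed
  next
    case True
    then obtain z where zP: "z \<in> P" and z: "u < z" "z < v" by auto
    define W where "W = \<omega> u v"
    have W_nn: "0 \<le> W" unfolding W_def using om_nn au uv vb by simp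
    define Q where "Q = {x\<in>P - {v}. \<omega> u x \<le> W / 2}"
    have uQ: "u \<in> Q" unfolding Q_def using uP z om_zero[of u] au uv vb W_nn by auto
    have finQ: "finite Q" unfolding Q_def using fin by auto
    define c where "c = Max Q"
    have cQ: "c \<in> Q" unfolding c_def using Max_in[OF finQ] uQ by auto
    have cP: "c \<in> P" and cv: "c < v" and cW: "\<omega> u c \<le> W / 2"
      using cQ sub unfolding Q_def by auto
    have uc: "u \<le> c" unfolding c_def using Max_ge[OF finQ uQ] .
    define c' where "c' = nxt P c"
    have c'P: "c' \<in> P" and cc': "c < c'" and c'min: "\<And>y. y \<in> P \<Longrightarrow> c < y \<Longrightarrow> c' \<le> y"
      using nxt_props[OF fin vP cv] unfolding c'_def by auto
    have c'v: "c' \<le> v" using c'P sub by auto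
    have c'W: "\<omega> c' v \<le> W / 2"
    proof (cases "c' = v")
      case True then show ?thesis using om_zero[of v] au uv vb W_nn by simp
    next
      case False
      then have "c' \<notin> Q" using cc' Max_ge[OF finQ, of c'] unfolding c_def by force
      then have "\<omega> u c' > W / 2" unfolding Q_def using c'P False by auto
      moreover have "\<omega> u c' + \<omega> c' v \<le> W" unfolding W_def
        using om_sup[of u c' v] au uc cc' c'v vb by simp
      ultimately show ?thesis by simp
    qed
    define P1 where "P1 = {x\<in>P. x \<le> c}"
    define P23 where "P23 = {x\<in>P. c \<le> x}"
    define P3 where "P3 = {x\<in>P. c' \<le> x}"
    have P2: "{x\<in>P23. x \<le> c'} = {c, c'}"
      unfolding P23_def using cP c'P cc' c'min by force
    have P3': "{x\<in>P23. c' \<le> x} = P3" unfolding P23_def P3_def using cc' by auto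
    have e: "psum Xi P = psum Xi P1 + Xi c c' + psum Xi P3"
    proof -
      have "psum Xi P = psum Xi P1 + psum Xi P23"
        unfolding P1_def P23_def by (rule psum_split[OF fin cP])
      moreover have "psum Xi P23 = psum Xi {c, c'} + psum Xi P3"
        using psum_split[of P23 c' Xi] P2 P3' fin c'P cc' unfolding P23_def by auto
      ultimately show ?thesis using psum_two[OF cc'] by simp
    qed
    have card1: "card P1 < card P"
      using c'P cc' fin unfolding P1_def by (intro psubset_card_mono) force+
    have card3: "card P3 < card P"
      using uP uc cc' fin unfolding P3_def by (intro psubset_card_mono) force+
    have s1: "P1 \<subseteq> {u..c}" "P3 \<subseteq> {c'..v}" using sub unfolding P1_def P3_def by auto
    have IH1: "norm (psum Xi P1 - Xi u c) \<le> Cs * \<omega> u c powr \<theta>"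
      using less.hyps[OF card1 _ s1(1)] fin uP cP au uc cv vb unfolding P1_def by auto
    have IH3: "norm (psum Xi P3 - Xi c' v) \<le> Cs * \<omega> c' v powr \<theta>"
      using less.hyps[OF card3 _ s1(2)] fin vP c'P au uc cc' c'v vb unfolding P3_def by auto
    have th0: "0 \<le> \<theta>" using th by simp
    have p1: "\<omega> u c powr \<theta> \<le> (W/2) powr \<theta>"
      using cW om_nn[of u c] au uc cv vb th0 by (intro powr_mono2) auto
    have p3: "\<omega> c' v powr \<theta> \<le> (W/2) powr \<theta>"
      using c'W om_nn[of c' v] au uc cc' c'v vb th0 by (intro powr_mono2) auto
    have d1: "norm (Xi u v - Xi u c - Xi c v) \<le> W powr \<theta>"
      unfolding W_def using delta[of u c v] au uc cv vb by simp
    have d2: "norm (Xi c v - Xi c c' - Xi c' v) \<le> W powr \<theta>"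
    proof -
      have "norm (Xi c v - Xi c c' - Xi c' v) \<le> \<omega> c v powr \<theta>"
        using delta[of c c' v] au uc cc' c'v vb by simp
      also have "\<dots> \<le> W powr \<theta>" unfolding W_def
        using om_mono[of u c v v] om_nn[of c v] au uc cv vb th0 by (intro powr_mono2) auto
      finally show ?thesis .
    qed
    define A1 where "A1 = psum Xi P1 - Xi u c"
    define A3 where "A3 = psum Xi P3 - Xi c' v"
    define D1 where "D1 = Xi u v - Xi u c - Xi c v"
    define D2 where "D2 = Xi c v - Xi c c' - Xi c' v"
    have "psum Xi P - Xi u v = A1 + A3 - D1 - D2"
      unfolding e A1_def A3_def D1_def D2_def by (simp add: algebra_simps)
    then have eqn: "norm (psum Xi P - Xi u v) = norm (A1 + A3 - D1 - D2)" by simp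
    have t1: "norm (A1 + A3 - D1 - D2) \<le> norm (A1 + A3 - D1) + norm D2" by (rule norm_triangle_ineq4)
    moreover have t2: "norm (A1 + A3 - D1) \<le> norm (A1 + A3) + norm D1" by (rule norm_triangle_ineq4)
    moreover have t3: "norm (A1 + A3) \<le> norm A1 + norm A3" by (rule norm_triangle_ineq)
    moreover have "Cs * \<omega> u c powr \<theta> \<le> Cs * (W/2) powr \<theta>" using p1 Cs_pos by simp
    moreover have "Cs * \<omega> c' v powr \<theta> \<le> Cs * (W/2) powr \<theta>" using p3 Cs_pos by simp
    ultimately have "norm (psum Xi P - Xi u v) \<le> Cs * (W/2) powr \<theta> + Cs * (W/2) powr \<theta> + W powr \<theta> + W powr \<theta>"
      using eqn IH1[folded A1_def] IH3[folded A3_def] d1[folded D1_def] d2[folded D2_def] by linarith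
    also have "\<dots> = (Cs * 2 powr (1 - \<theta>) + 2) * W powr \<theta>"
    proof -
      have e1: "(W/2) powr \<theta> = W powr \<theta> / 2 powr \<theta>" using W_nn by (simp add: powr_divide)
      have e2: "2 powr (1 - \<theta>) = 2 / 2 powr \<theta>" by (simp add: powr_diff)
      have q: "2 powr \<theta> > 0" by simp
      show ?thesis unfolding e1 e2 using q by (simp add: field_simps)
    qed
    also have "\<dots> = Cs * \<omega> u v powr \<theta>" using Cs_eq unfolding W_def by simp
    finally show ?thesis .
  qed
qed

lemma pow_split: "0 \<le> x \<Longrightarrow> x powr \<theta> = x powr (\<theta> - 1) * x"
proof -
  assume x: "0 \<le> x"
  have "x powr \<theta> = x powr ((\<theta> - 1) + 1)" by simp
  also have "\<dots> = x powr (\<theta> - 1) * x powr 1" by (rule powr_add)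
  also have "x powr 1 = x" using x by (cases "x = 0") auto
  finally show ?thesis .
qed

lemma refine:
  "finite Q \<Longrightarrow> P \<subseteq> Q \<Longrightarrow> Q \<subseteq> {u..v} \<Longrightarrow> u \<in> P \<Longrightarrow> v \<in> P \<Longrightarrow> a \<le> u \<Longrightarrow> v \<le> b \<Longrightarrow> 0 \<le> \<delta> \<Longrightarrow>
   (\<forall>x y. consec P x y \<longrightarrow> \<omega> x y \<le> \<delta>) \<Longrightarrow>
   norm (psum Xi Q - psum Xi P) \<le> Cs * \<delta> powr (\<theta> - 1) * \<omega> u v"
proof (induction "card P" arbitrary: P Q u v rule: less_induct)
  case less
  note finQ = less.prems(1) and PQ = less.prems(2) and sub = less.prems(3) and uP = less.prems(4)
    and vP = less.prems(5) and au = less.prems(6) and vb = less.prems(7) and d0 = less.prems(8)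
    and cons = less.prems(9)
  have fin: "finite P" using finQ PQ finite_subset by blast
  have uv: "u \<le> v" using sub PQ uP by auto
  have om0: "0 \<le> \<omega> u v" using om_nn au uv vb by simp
  have rhs_nn: "0 \<le> Cs * \<delta> powr (\<theta> - 1) * \<omega> u v" using Cs_pos om0 by simp
  show ?case
  proof (cases "\<exists>z\<in>P. u < z \<and> z < v")
    case False
    show ?thesis
    proof (cases "u = v")
      case True
      then have "P = {u}" "Q = {u}" using sub PQ uP by auto
      then show ?thesis using rhs_nn by simp
    next
      case uv': False
      then have Pe: "P = {u, v}" using sub PQ uP vP False by force
      have "consec P u v" unfolding consec_def Pe using uv uv' by auto
      then have omd: "\<omega> u v \<le> \<delta>" using cons by auto
      have "norm (psum Xi Q - psum Xi P) = norm (psum Xi Q - Xi u v)"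
        unfolding Pe using psum_two[of u v Xi] uv uv' by simp
      also have "\<dots> \<le> Cs * \<omega> u v powr \<theta>"
        by (rule maximal) (use finQ sub PQ uP vP au vb in auto)
      also have "\<dots> = Cs * \<omega> u v powr (\<theta> - 1) * \<omega> u v" using pow_split[OF om0] by simp
      also have "\<dots> \<le> Cs * \<delta> powr (\<theta> - 1) * \<omega> u v"
        using omd om0 th Cs_pos by (intro mult_right_mono mult_left_mono powr_mono2) auto
      finally show ?thesis .
    qed
  next
    case True
    then obtain c where cP: "c \<in> P" and c: "u < c" "c < v" by auto
    define P1 where "P1 = {x\<in>P. x \<le> c}"
    define P2 where "P2 = {x\<in>P. c \<le> x}"
    define Q1 where "Q1 = {x\<in>Q. x \<le> c}"
    define Q2 where "Q2 = {x\<in>Q. c \<le> x}"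
    have cQ: "c \<in> Q" using cP PQ by auto
    have eP: "psum Xi P = psum Xi P1 + psum Xi P2" unfolding P1_def P2_def by (rule psum_split[OF fin cP])
    have eQ: "psum Xi Q = psum Xi Q1 + psum Xi Q2" unfolding Q1_def Q2_def by (rule psum_split[OF finQ cQ])
    have card1: "card P1 < card P"
      using vP c fin unfolding P1_def by (intro psubset_card_mono) force+
    have card2: "card P2 < card P"
      using uP c fin unfolding P2_def by (intro psubset_card_mono) force+
    have cons1: "\<forall>x y. consec P1 x y \<longrightarrow> \<omega> x y \<le> \<delta>"
    proof (intro allI impI)
      fix x y assume "consec P1 x y"
      then have "consec P x y" unfolding consec_def P1_def by force
      then show "\<omega> x y \<le> \<delta>" using cons by auto
    qed
    have cons2: "\<forall>x y. consec P2 x y \<longrightarrow> \<omega> x y \<le> \<delta>"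
    proof (intro allI impI)
      fix x y assume "consec P2 x y"
      then have "consec P x y" unfolding consec_def P2_def by force
      then show "\<omega> x y \<le> \<delta>" using cons by auto
    qed
    have s: "P1 \<subseteq> Q1" "P2 \<subseteq> Q2" "Q1 \<subseteq> {u..c}" "Q2 \<subseteq> {c..v}" "finite Q1" "finite Q2"
      using PQ sub finQ unfolding P1_def P2_def Q1_def Q2_def by auto
    have IH1: "norm (psum Xi Q1 - psum Xi P1) \<le> Cs * \<delta> powr (\<theta> - 1) * \<omega> u c"
      by (rule less.hyps[OF card1 s(5) s(1) s(3)]) (use uP cP c au d0 cons1 vb in \<open>auto simp: P1_def\<close>)
    have IH2: "norm (psum Xi Q2 - psum Xi P2) \<le> Cs * \<delta> powr (\<theta> - 1) * \<omega> c v"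
      by (rule less.hyps[OF card2 s(6) s(2) s(4)]) (use vP cP c au d0 cons2 vb in \<open>auto simp: P2_def\<close>)
    have "norm (psum Xi Q - psum Xi P) = norm ((psum Xi Q1 - psum Xi P1) + (psum Xi Q2 - psum Xi P2))"
      unfolding eP eQ by (simp add: algebra_simps)
    also have "\<dots> \<le> norm (psum Xi Q1 - psum Xi P1) + norm (psum Xi Q2 - psum Xi P2)"
      by (rule norm_triangle_ineq)
    also have "\<dots> \<le> Cs * \<delta> powr (\<theta> - 1) * (\<omega> u c + \<omega> c v)"
      using IH1 IH2 by (simp add: algebra_simps)
    also have "\<dots> \<le> Cs * \<delta> powr (\<theta> - 1) * \<omega> u v"
      using om_sup[of u c v] au c vb Cs_pos by (intro mult_left_mono) auto
    finally show ?thesis .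
  qed
qed

end


definition dpt :: "real \<Rightarrow> real \<Rightarrow> nat \<Rightarrow> nat \<Rightarrow> real" where
  "dpt s t l j = s + real j / 2^l * (t - s)"

definition dy :: "real \<Rightarrow> real \<Rightarrow> nat \<Rightarrow> real set" where
  "dy s t l = dpt s t l ` {..2^l}"

lemma dpt_mono: "s < t \<Longrightarrow> i < j \<Longrightarrow> dpt s t l i < dpt s t l j"
  unfolding dpt_def by (simp add: divide_strict_right_mono)

lemma dpt_mono_iff: "s < t \<Longrightarrow> dpt s t l i < dpt s t l j \<longleftrightarrow> i < j"
  by (metis dpt_mono linorder_neq_iff order_less_asym)

lemma dpt_0: "dpt s t l 0 = s" and dpt_last: "dpt s t l (2^l) = t"
  unfolding dpt_def by simp_all

lemma dpt_in: "s \<le> t \<Longrightarrow> j \<le> 2^l \<Longrightarrow> dpt s t l j \<in> {s..t}"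
proof -
  assume st: "s \<le> t" and j: "j \<le> 2^l"
  have "real j / 2^l \<le> 1" using j by (simp add: field_simps)
  then have "real j / 2^l * (t - s) \<le> t - s" using st by (intro mult_left_le_one_le) auto
  then show ?thesis unfolding dpt_def using st by simp
qed

lemma dpt_step: "dpt s t l (Suc j) - dpt s t l j = (t - s) / 2^l"
  unfolding dpt_def by (simp add: field_simps)

lemma dy_fin: "finite (dy s t l)" unfolding dy_def by simp

lemma dy_sub: "s \<le> t \<Longrightarrow> dy s t l \<subseteq> {s..t}" unfolding dy_def using dpt_in by auto

lemma dy_ends: "s \<in> dy s t l" "t \<in> dy s t l"
  unfolding dy_def using dpt_0[of s t l] dpt_last[of s t l] by (metis atMost_iff image_eqI zero_le le_refl)+

lemma dy_consec:
  assumes "s < t" "consec (dy s t l) x y"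
  shows "y - x \<le> (t - s) / 2^l"
proof -
  from assms(2) obtain i j where i: "i \<le> 2^l" "x = dpt s t l i" and j: "j \<le> 2^l" "y = dpt s t l j"
    and xy: "x < y" and nb: "\<forall>z\<in>dy s t l. \<not> (x < z \<and> z < y)"
    unfolding consec_def dy_def by auto
  have ij: "i < j" using xy i j dpt_mono_iff[OF assms(1)] by auto
  have "j = Suc i"
  proof (rule ccontr)
    assume "j \<noteq> Suc i"
    then have "Suc i < j" using ij by simp
    then have "dpt s t l (Suc i) \<in> dy s t l" "x < dpt s t l (Suc i)" "dpt s t l (Suc i) < y"
      unfolding dy_def using i j dpt_mono[OF assms(1)] by auto
    then show False using nb by auto
  qed
  then show ?thesis using i j dpt_step by simp
qed

lemma psum_dy:
  assumes "s < t"
  shows "psum Xi (dy s t l) = (\<Sum>j<2^l. Xi (dpt s t l j) (dpt s t l (Suc j)))"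
proof -
  let ?D = "dy s t l"
  have idx: "{x\<in>?D. \<exists>y\<in>?D. x < y} = dpt s t l ` {..<2^l}"
  proof (rule set_eqI, rule iffI)
    fix x assume "x \<in> {x\<in>?D. \<exists>y\<in>?D. x < y}"
    then obtain i j where i: "i \<le> 2^l" "x = dpt s t l i" and "j \<le> 2^l" "x < dpt s t l j"
      unfolding dy_def by auto
    then have "i < j" using dpt_mono_iff[OF assms] by auto
    then show "x \<in> dpt s t l ` {..<2^l}" using i \<open>j \<le> 2^l\<close> by auto
  next
    fix x assume "x \<in> dpt s t l ` {..<2^l}"
    then obtain i where i: "i < 2^l" "x = dpt s t l i" by auto
    then have "dpt s t l (2^l) \<in> ?D" "x < dpt s t l (2^l)" unfolding dy_def
      using dpt_mono[OF assms] by auto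
    then show "x \<in> {x\<in>?D. \<exists>y\<in>?D. x < y}" using i unfolding dy_def by auto
  qed
  have inj: "inj_on (dpt s t l) {..<2^l}"
    by (rule inj_onI) (metis dpt_mono_iff[OF assms] linorder_neq_iff)
  have nx: "nxt ?D (dpt s t l j) = dpt s t l (Suc j)" if "j < 2^l" for j
  proof (rule nxt_eqI[OF dy_fin])
    show "dpt s t l (Suc j) \<in> ?D" unfolding dy_def using that by auto
    show "dpt s t l j < dpt s t l (Suc j)" using dpt_mono[OF assms] by auto
    fix z assume "z \<in> ?D" "dpt s t l j < z"
    then obtain k where "k \<le> 2^l" "z = dpt s t l k" "j < k" unfolding dy_def
      using dpt_mono_iff[OF assms] by auto
    then show "dpt s t l (Suc j) \<le> z"
      by (metis Suc_leI dpt_mono[OF assms] le_less order_refl)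
  qed
  show ?thesis unfolding psum_def idx sum.reindex[OF inj] comp_def by (rule sum.cong[OF refl]) (simp add: nx)
qed

lemma nyi_sum_psum:
  assumes "s < t"
  shows "nyi_sum A x s t l = psum (\<lambda>u v. A v (x u) - A u (x u)) (dy s t l)"
  unfolding psum_dy[OF assms] nyi_sum_def dpt_def by (simp add: Let_def)

lemma nyi_sum_triv: "nyi_sum A x s s l = 0"
  unfolding nyi_sum_def by simp


definition psums :: "('b \<Rightarrow> 'b \<Rightarrow> real) \<Rightarrow> real \<Rightarrow> real \<Rightarrow> real \<Rightarrow> (real \<Rightarrow> 'b) \<Rightarrow> real set" where
  "psums d q u v f = {(\<Sum>i<n. d (f (t (Suc i))) (f (t i)) powr q) | n t.
      t 0 = u \<and> t n = v \<and> (\<forall>i<n. t i \<le> t (Suc i))}"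

definition pv :: "('b \<Rightarrow> 'b \<Rightarrow> real) \<Rightarrow> real \<Rightarrow> (real \<Rightarrow> 'b) \<Rightarrow> real \<Rightarrow> real \<Rightarrow> real" where
  "pv d q f u v = Sup (psums d q u v f)"

lemma part_bounds:
  fixes t :: "nat \<Rightarrow> real"
  assumes "t 0 = u" "t n = v" "\<forall>i<n. t i \<le> t (Suc i)" "i \<le> n"
  shows "u \<le> t i \<and> t i \<le> v"
proof -
  have mono: "t i \<le> t j" if "i \<le> j" "j \<le> n" for i j
    using that
  proof (induction j)
    case 0 then show ?case by simp
  next
    case (Suc j)
    show ?case
    proof (cases "i = Suc j")
      case True then show ?thesis by simp
    next
      case False
      then have "i \<le> j" "j < n" using Suc.prems by auto
      moreover have "t j \<le> t (Suc j)" using assms(3) \<open>j < n\<close> by simp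
      ultimately show ?thesis using Suc.IH by (meson order_trans less_imp_le)
    qed
  qed
  show ?thesis using mono[of 0 i] mono[of i n] assms by auto
qed

lemma sum_split_add: fixes m n :: nat and g :: "nat \<Rightarrow> 'a::comm_monoid_add" shows "(\<Sum>i<m+n. g i) = (\<Sum>i<m. g i) + (\<Sum>i<n. g (m + i))"
  by (induction n) (simp_all add: add.assoc)

definition pbound :: "('b \<Rightarrow> 'b \<Rightarrow> real) \<Rightarrow> real \<Rightarrow> real \<Rightarrow> real \<Rightarrow> (real \<Rightarrow> 'b) \<Rightarrow> real \<Rightarrow> bool" where
  "pbound d q a b f M \<longleftrightarrow> (\<forall>n t. t 0 = a \<and> t n = b \<and> (\<forall>i<n. t i \<le> t (Suc i)) \<longrightarrow>
      (\<Sum>i<n. d (f (t (Suc i))) (f (t i)) powr q) \<le> M)"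

lemma finite_pvar_pbound: "finite_pvar d q a b f \<longleftrightarrow> (\<exists>M. pbound d q a b f M)"
  unfolding finite_pvar_def pbound_def by simp

lemma psums_sub_bound:
  fixes t :: "nat \<Rightarrow> real"
  assumes fp0: "pbound d q a b f M"
    and "a \<le> u" "u \<le> v" "v \<le> b"
    and "t 0 = u" "t n = v" "\<forall>i<n. t i \<le> t (Suc i)"
  shows "(\<Sum>i<n. d (f (t (Suc i))) (f (t i)) powr q) \<le> M"
proof -
  note fp = fp0[unfolded pbound_def]
  define t' where "t' j = (if j = 0 then a else if j \<le> Suc n then t (j - 1) else b)" for j
  have t'0: "t' 0 = a" and t'n: "t' (Suc (Suc n)) = b" unfolding t'_def by auto
  have mono: "\<forall>i<Suc (Suc n). t' i \<le> t' (Suc i)"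
  proof (intro allI impI)
    fix i assume i: "i < Suc (Suc n)"
    show "t' i \<le> t' (Suc i)"
    proof (cases "i = 0")
      case True then show ?thesis unfolding t'_def using assms by simp
    next
      case False
      show ?thesis
      proof (cases "i = Suc n")
        case True then show ?thesis unfolding t'_def using assms by simp
      next
        case False
        then have "i - 1 < n" "Suc (i - 1) = i" using \<open>i \<noteq> 0\<close> i by auto
        then show ?thesis unfolding t'_def using assms(7) \<open>i \<noteq> 0\<close> i False
          by (metis Suc_leI diff_Suc_1 less_Suc_eq_le nat.distinct(1) \<open>i - 1 < n\<close>)
      qed
    qed
  qed
  let ?g = "\<lambda>i. d (f (t' (Suc i))) (f (t' i)) powr q"
  have e1: "(\<Sum>i<Suc (Suc n). ?g i) = (\<Sum>i<Suc n. ?g i) + ?g (Suc n)" by (rule sum.lessThan_Suc)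
  have e2: "(\<Sum>i<Suc n. ?g i) = ?g 0 + (\<Sum>i<n. ?g (Suc i))" by (rule sum.lessThan_Suc_shift)
  have "(\<Sum>i<Suc (Suc n). ?g i) = ?g 0 + (\<Sum>i<n. ?g (Suc i)) + ?g (Suc n)" unfolding e1 e2 ..
  moreover have "(\<Sum>i<n. ?g (Suc i)) = (\<Sum>i<n. d (f (t (Suc i))) (f (t i)) powr q)"
    by (rule sum.cong) (auto simp: t'_def)
  moreover have "(\<Sum>i<Suc (Suc n). ?g i) \<le> M" using fp t'0 t'n mono by blast
  moreover have "0 \<le> ?g 0" "0 \<le> ?g (Suc n)" by auto
  ultimately show ?thesis by linarith
qed

lemma finite_pvar_bdd:
  assumes "finite_pvar d q a b f" "a \<le> u" "u \<le> v" "v \<le> b"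
  shows "bdd_above (psums d q u v f)"
proof -
  obtain M where fp: "pbound d q a b f M"
    using assms(1) unfolding finite_pvar_pbound by blast
  show ?thesis unfolding bdd_above_def psums_def
    using psums_sub_bound[OF fp assms(2-4)] by blast
qed

lemma finite_pvar_sub:
  assumes "finite_pvar d q a b f" "a \<le> u" "u \<le> v" "v \<le> b"
  shows "finite_pvar d q u v f"
proof -
  obtain M where fp: "pbound d q a b f M"
    using assms(1) unfolding finite_pvar_pbound by blast
  show ?thesis unfolding finite_pvar_pbound pbound_def
    using psums_sub_bound[OF fp assms(2-4)] by blast
qed

lemma psums_ne: "u \<le> v \<Longrightarrow> d (f v) (f u) powr q \<in> psums d q u v f"
  unfolding psums_def
  by (rule CollectI, rule exI[of _ 1], rule exI[of _ "\<lambda>i. if i = 0 then u else v"]) auto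

lemma pv_upper: "bdd_above (psums d q u v f) \<Longrightarrow> t 0 = u \<Longrightarrow> t n = v \<Longrightarrow> \<forall>i<n. t i \<le> t (Suc i) \<Longrightarrow>
    (\<Sum>i<n. d (f (t (Suc i))) (f (t i)) powr q) \<le> pv d q f u v"
  unfolding pv_def by (rule cSup_upper) (auto simp: psums_def)

lemma pv_incr: "bdd_above (psums d q u v f) \<Longrightarrow> u \<le> v \<Longrightarrow> d (f v) (f u) powr q \<le> pv d q f u v"
  unfolding pv_def by (rule cSup_upper[OF psums_ne])

lemma pv_nn: "bdd_above (psums d q u v f) \<Longrightarrow> u \<le> v \<Longrightarrow> 0 \<le> pv d q f u v"
  using pv_incr[of d q u v f] by (meson order_trans powr_ge_zero)

lemma pv_least:
  fixes u v :: real
  assumes "u \<le> v" "\<And>n t. t 0 = u \<Longrightarrow> t n = v \<Longrightarrow> \<forall>i<n. t i \<le> t (Suc i) \<Longrightarrow>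
      (\<Sum>i<n. d (f (t (Suc i))) (f (t i)) powr q) \<le> B"
  shows "pv d q f u v \<le> B"
proof -
  have "psums d q u v f \<noteq> {}" using psums_ne[OF assms(1)] by auto
  moreover have "\<forall>x\<in>psums d q u v f. x \<le> B" unfolding psums_def using assms(2) by blast
  ultimately show ?thesis unfolding pv_def by (meson cSup_least)
qed

lemma psums_concat:
  fixes u m v :: real
  assumes "s1 \<in> psums d q u m f" "s2 \<in> psums d q m v f"
  shows "s1 + s2 \<in> psums d q u v f"
proof -
  obtain n1 t1 where 1: "s1 = (\<Sum>i<n1. d (f (t1 (Suc i))) (f (t1 i)) powr q)" "t1 0 = u" "t1 n1 = m"
    "\<forall>i<n1. t1 i \<le> t1 (Suc i)" using assms(1) unfolding psums_def by blast
  obtain n2 t2 where 2: "s2 = (\<Sum>i<n2. d (f (t2 (Suc i))) (f (t2 i)) powr q)" "t2 0 = m" "t2 n2 = v"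
    "\<forall>i<n2. t2 i \<le> t2 (Suc i)" using assms(2) unfolding psums_def by blast
  define t where "t i = (if i \<le> n1 then t1 i else t2 (i - n1))" for i
  let ?g = "\<lambda>i. d (f (t (Suc i))) (f (t i)) powr q"
  have E: "(\<Sum>i<n1+n2. ?g i) = (\<Sum>i<n1. ?g i) + (\<Sum>i<n2. ?g (n1 + i))" by (rule sum_split_add)
  have E1: "(\<Sum>i<n1. ?g i) = s1" unfolding 1 by (rule sum.cong) (auto simp: t_def)
  have E2: "(\<Sum>i<n2. ?g (n1 + i)) = s2" unfolding 2
    by (rule sum.cong) (auto simp: t_def 1 2 Suc_diff_le)
  have T: "t 0 = u" "t (n1 + n2) = v" using 1 2 by (auto simp: t_def)
  have M: "\<forall>i<n1+n2. t i \<le> t (Suc i)"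
  proof (intro allI impI)
    fix i assume i: "i < n1 + n2"
    show "t i \<le> t (Suc i)"
    proof (cases "i < n1")
      case True then show ?thesis using 1 by (auto simp: t_def)
    next
      case False
      then have "i - n1 < n2" "Suc i - n1 = Suc (i - n1)" using i by auto
      then show ?thesis using 2 False by (auto simp: t_def 1)
    qed
  qed
  have "s1 + s2 = (\<Sum>i<n1+n2. ?g i)" using E E1 E2 by simp
  then show ?thesis unfolding psums_def mem_Collect_eq using T M by blast
qed

lemma pv_super:
  assumes "bdd_above (psums d q u v f)" "u \<le> m" "m \<le> v"
    and "bdd_above (psums d q u m f)" "bdd_above (psums d q m v f)"
  shows "pv d q f u m + pv d q f m v \<le> pv d q f u v"
proof -
  have S: "s1 + s2 \<le> pv d q f u v" if "s1 \<in> psums d q u m f" "s2 \<in> psums d q m v f" for s1 s2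
    unfolding pv_def by (rule cSup_upper[OF psums_concat[OF that] assms(1)])
  have ne1: "psums d q u m f \<noteq> {}" using psums_ne[OF assms(2)] by auto
  have ne2: "psums d q m v f \<noteq> {}" using psums_ne[OF assms(3)] by auto
  have A: "pv d q f u m \<le> pv d q f u v - s2" if s2: "s2 \<in> psums d q m v f" for s2
  proof -
    have "\<forall>s1\<in>psums d q u m f. s1 \<le> pv d q f u v - s2" using S s2 by force
    then show ?thesis unfolding pv_def[of d q f u m] using ne1 by (meson cSup_least)
  qed
  have "\<forall>s2\<in>psums d q m v f. s2 \<le> pv d q f u v - pv d q f u m" using A by force
  then have "pv d q f m v \<le> pv d q f u v - pv d q f u m"
    unfolding pv_def[of d q f m v] using ne2 by (meson cSup_least)
  then show ?thesis by simp
qed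

lemma super_sum:
  fixes t :: "nat \<Rightarrow> real" and W :: "real \<Rightarrow> real \<Rightarrow> real"
  assumes sup: "\<And>x y z. a \<le> x \<Longrightarrow> x \<le> y \<Longrightarrow> y \<le> z \<Longrightarrow> z \<le> b \<Longrightarrow> W x y + W y z \<le> W x z"
    and nn: "\<And>x. a \<le> x \<Longrightarrow> x \<le> b \<Longrightarrow> 0 \<le> W x x"
    and t: "\<forall>i<n. t i \<le> t (Suc i)" "\<forall>i\<le>n. a \<le> t i \<and> t i \<le> b"
  shows "(\<Sum>i<n. W (t i) (t (Suc i))) \<le> W (t 0) (t n)"
proof -
  have "k \<le> n \<Longrightarrow> (\<Sum>i<k. W (t i) (t (Suc i))) \<le> W (t 0) (t k)" for k
  proof (induction k)
    case 0 then show ?case using nn t by simp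
  next
    case (Suc k)
    have "k \<le> n" using Suc.prems by simp
    then have "(\<Sum>i<Suc k. W (t i) (t (Suc i))) \<le> W (t 0) (t k) + W (t k) (t (Suc k))" using Suc.IH by simp
    also have "\<dots> \<le> W (t 0) (t (Suc k))"
    proof (rule sup)
      show "a \<le> t 0" using t by auto
      show "t (Suc k) \<le> b" using t Suc by auto
      show "t k \<le> t (Suc k)" using t Suc by auto
      have "\<forall>j. j \<le> k \<longrightarrow> t 0 \<le> t j"
      proof (intro allI impI)
        fix j show "j \<le> k \<Longrightarrow> t 0 \<le> t j"
          by (induction j) (use t Suc in \<open>auto intro: order_trans\<close>)
      qed
      then show "t 0 \<le> t k" by simp
    qed
    finally show ?case .
  qed
  then show ?thesis by simp
qed

lemma pv_trick:
  fixes t :: "nat \<Rightarrow> real" and u v :: real and d :: "'b \<Rightarrow> 'b \<Rightarrow> real"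
  assumes fp: "\<And>n t. t 0 = u \<Longrightarrow> t n = v \<Longrightarrow> \<forall>i<n. t i \<le> t (Suc i) \<Longrightarrow>
      (\<Sum>i<n. d (f (t (Suc i))) (f (t i)) powr q) \<le> M"
    and dd: "\<And>x y. u \<le> x \<Longrightarrow> x \<le> y \<Longrightarrow> y \<le> v \<Longrightarrow> 0 \<le> d (f y) (f x) \<and> d (f y) (f x) \<le> \<epsilon>"
    and qq: "q \<le> q'"
    and tt: "t 0 = u" "t n = v" "\<forall>i<n. t i \<le> t (Suc i)"
  shows "(\<Sum>i<n. d (f (t (Suc i))) (f (t i)) powr q') \<le> M * \<epsilon> powr (q' - q)"
proof -
  have "d (f (t (Suc i))) (f (t i)) powr q' \<le> d (f (t (Suc i))) (f (t i)) powr q * \<epsilon> powr (q' - q)" if i: "i \<in> {..<n}" for i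
  proof -
    have b: "u \<le> t i" "t (Suc i) \<le> v" using part_bounds[OF tt, of i] part_bounds[OF tt, of "Suc i"] i by auto
    have "t i \<le> t (Suc i)" using tt i by auto
    then have D: "0 \<le> d (f (t (Suc i))) (f (t i))" "d (f (t (Suc i))) (f (t i)) \<le> \<epsilon>" using dd b by auto
    have "d (f (t (Suc i))) (f (t i)) powr q' = d (f (t (Suc i))) (f (t i)) powr q * d (f (t (Suc i))) (f (t i)) powr (q' - q)"
      using powr_add[of "d (f (t (Suc i))) (f (t i))" q "q' - q"] by simp
    also have "\<dots> \<le> d (f (t (Suc i))) (f (t i)) powr q * \<epsilon> powr (q' - q)"
      using D qq by (intro mult_left_mono powr_mono2) auto
    finally show ?thesis .
  qed
  then have "(\<Sum>i<n. d (f (t (Suc i))) (f (t i)) powr q') \<le> (\<Sum>i<n. d (f (t (Suc i))) (f (t i)) powr q * \<epsilon> powr (q' - q))"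
    by (rule sum_mono)
  also have "\<dots> = (\<Sum>i<n. d (f (t (Suc i))) (f (t i)) powr q) * \<epsilon> powr (q' - q)"
    by (simp add: sum_distrib_right)
  also have "\<dots> \<le> M * \<epsilon> powr (q' - q)" using fp[OF tt] by (intro mult_right_mono) auto
  finally show ?thesis .
qed


definition hpairs :: "real \<Rightarrow> ('a::euclidean_space \<times> 'a) set" where
  "hpairs K = {(x, y). x \<in> cball 0 K \<and> y \<in> cball 0 K \<and> x \<noteq> y}"

definition hrat :: "real \<Rightarrow> ('a::euclidean_space \<Rightarrow> 'a) \<Rightarrow> 'a \<times> 'a \<Rightarrow> real" where
  "hrat \<eta> g xy = norm (g (fst xy) - g (snd xy)) / norm (fst xy - snd xy) powr \<eta>"

lemma lhn_eq: "loc_holder_norm K \<eta> g = (SUP x\<in>cball 0 K. norm (g x)) + (SUP xy\<in>hpairs K. hrat \<eta> g xy)"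
  unfolding loc_holder_norm_def hpairs_def hrat_def ..

definition hb :: "real \<Rightarrow> real \<Rightarrow> ('a::euclidean_space \<Rightarrow> 'a) \<Rightarrow> bool" where
  "hb K \<eta> g \<longleftrightarrow> bdd_above ((\<lambda>x. norm (g x)) ` cball 0 K) \<and> bdd_above (hrat \<eta> g ` hpairs K)"

lemma hpairs_ne: "K > 0 \<Longrightarrow> hpairs K \<noteq> ({} :: ('a::euclidean_space \<times> 'a) set)"
proof -
  assume K: "K > 0"
  obtain e :: 'a where e: "e \<in> Basis" using nonempty_Basis by blast
  have "norm (K *\<^sub>R e) = K" using K e by (simp add: norm_Basis)
  moreover have "K *\<^sub>R e \<noteq> 0" using \<open>norm (K *\<^sub>R e) = K\<close> K by auto
  ultimately have "(K *\<^sub>R e, 0) \<in> hpairs K" unfolding hpairs_def using K by auto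
  then show ?thesis by auto
qed

lemma hb_loc:
  assumes "loc_holder \<eta> g" "K > 0" "\<eta> > 0"
  shows "hb K \<eta> g"
proof -
  obtain C where C: "\<forall>x\<in>cball 0 K. \<forall>y\<in>cball 0 K. norm (g x - g y) \<le> C * norm (x - y) powr \<eta>"
    using assms(1,2) unfolding loc_holder_def by blast
  have "norm (g x) \<le> norm (g 0) + \<bar>C\<bar> * K powr \<eta>" if x: "x \<in> cball 0 K" for x
  proof -
    have "norm (g x) \<le> norm (g 0) + norm (g x - g 0)" by (metis add.commute norm_triangle_sub)
    also have "norm (g x - g 0) \<le> C * norm x powr \<eta>"
    proof -
      have "(0::'a) \<in> cball 0 K" using assms(2) by simp
      then have "norm (g x - g 0) \<le> C * norm (x - 0) powr \<eta>" using C x by blast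
      then show ?thesis by simp
    qed
    also have "C * norm x powr \<eta> \<le> \<bar>C\<bar> * K powr \<eta>"
    proof -
      have "norm x powr \<eta> \<le> K powr \<eta>" using x assms by (intro powr_mono2) auto
      have "C * norm x powr \<eta> \<le> \<bar>C\<bar> * norm x powr \<eta>" by (intro mult_right_mono) auto
      also have "\<dots> \<le> \<bar>C\<bar> * K powr \<eta>" using \<open>norm x powr \<eta> \<le> K powr \<eta>\<close> by (intro mult_left_mono) auto
      finally show ?thesis .
    qed
    finally show ?thesis by simp
  qed
  moreover have "hrat \<eta> g xy \<le> C" if xy: "xy \<in> hpairs K" for xy
  proof -
    obtain x y where xy': "xy = (x, y)" "x \<in> cball 0 K" "y \<in> cball 0 K" "x \<noteq> y"
      using xy unfolding hpairs_def by auto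
    have pos: "norm (x - y) powr \<eta> > 0" using xy' by simp
    show ?thesis unfolding hrat_def xy' using C xy' pos by (simp add: divide_le_eq)
  qed
  ultimately show ?thesis unfolding hb_def bdd_above_def by blast
qed

lemma loc_holder_diff:
  assumes "loc_holder \<eta> f" "loc_holder \<eta> g"
  shows "loc_holder \<eta> (\<lambda>z. f z - g z)"
  unfolding loc_holder_def
proof (intro allI impI)
  fix K :: real assume K: "K > 0"
  obtain C1 where C1: "\<forall>x\<in>cball 0 K. \<forall>y\<in>cball 0 K. norm (f x - f y) \<le> C1 * norm (x - y) powr \<eta>"
    using assms(1) K unfolding loc_holder_def by blast
  obtain C2 where C2: "\<forall>x\<in>cball 0 K. \<forall>y\<in>cball 0 K. norm (g x - g y) \<le> C2 * norm (x - y) powr \<eta>"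
    using assms(2) K unfolding loc_holder_def by blast
  have "norm ((f x - g x) - (f y - g y)) \<le> (C1 + C2) * norm (x - y) powr \<eta>"
    if "x \<in> cball 0 K" "y \<in> cball 0 K" for x y
  proof -
    have E: "(f x - g x) - (f y - g y) = (f x - f y) - (g x - g y)" by (simp add: algebra_simps)
    have "norm ((f x - g x) - (f y - g y)) \<le> norm (f x - f y) + norm (g x - g y)"
      unfolding E by (rule norm_triangle_ineq4)
    moreover have "norm (f x - f y) \<le> C1 * norm (x - y) powr \<eta>" "norm (g x - g y) \<le> C2 * norm (x - y) powr \<eta>"
      using C1 C2 that by auto
    ultimately show ?thesis by (simp add: distrib_right)
  qed
  then show "\<exists>C. \<forall>x\<in>cball 0 K. \<forall>y\<in>cball 0 K. norm (f x - g x - (f y - g y)) \<le> C * norm (x - y) powr \<eta>"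
    by blast
qed

lemma hrat_nn: "0 \<le> hrat \<eta> g xy" unfolding hrat_def by simp

lemma lhn_props:
  assumes "hb K \<eta> g" "K > 0"
  shows "0 \<le> loc_holder_norm K \<eta> g"
    and "x \<in> cball 0 K \<Longrightarrow> norm (g x) \<le> loc_holder_norm K \<eta> g"
    and "x \<in> cball 0 K \<Longrightarrow> y \<in> cball 0 K \<Longrightarrow> norm (g x - g y) \<le> loc_holder_norm K \<eta> g * norm (x - y) powr \<eta>"
proof -
  have b1: "bdd_above ((\<lambda>x. norm (g x)) ` cball 0 K)" and b2: "bdd_above (hrat \<eta> g ` hpairs K)"
    using assms(1) unfolding hb_def by auto
  have S1: "norm (g x) \<le> (SUP x\<in>cball 0 K. norm (g x))" if "x \<in> cball 0 K" for x
    using cSUP_upper[OF that b1] .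
  have S1nn: "0 \<le> (SUP x\<in>cball 0 K. norm (g x))"
    using S1[of 0] assms(2) by (meson centre_in_cball less_imp_le norm_ge_zero order_trans)
  obtain xy0 :: "'a \<times> 'a" where xy0: "xy0 \<in> hpairs K" using hpairs_ne[OF assms(2)] by blast
  have S2: "hrat \<eta> g xy \<le> (SUP xy\<in>hpairs K. hrat \<eta> g xy)" if "xy \<in> hpairs K" for xy
    using cSUP_upper[OF that b2] .
  have S2nn: "0 \<le> (SUP xy\<in>hpairs K. hrat \<eta> g xy)" using S2[OF xy0] hrat_nn by (meson order_trans)
  show "0 \<le> loc_holder_norm K \<eta> g" unfolding lhn_eq using S1nn S2nn by simp
  show "x \<in> cball 0 K \<Longrightarrow> norm (g x) \<le> loc_holder_norm K \<eta> g" unfolding lhn_eq using S1 S2nn by fastforce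
  assume x: "x \<in> cball 0 K" and y: "y \<in> cball 0 K"
  show "norm (g x - g y) \<le> loc_holder_norm K \<eta> g * norm (x - y) powr \<eta>"
  proof (cases "x = y")
    case True then show ?thesis by simp
  next
    case False
    then have xy: "(x, y) \<in> hpairs K" unfolding hpairs_def using x y by auto
    have pos: "norm (x - y) powr \<eta> > 0" using False by simp
    have "hrat \<eta> g (x, y) \<le> loc_holder_norm K \<eta> g" unfolding lhn_eq using S2[OF xy] S1nn by simp
    then show ?thesis unfolding hrat_def using pos by (simp add: divide_le_eq)
  qed
qed

lemma lhn_triangle:
  assumes "hb K \<eta> f" "hb K \<eta> g" "K > 0"
  shows "hb K \<eta> (\<lambda>z. f z + g z)" "loc_holder_norm K \<eta> (\<lambda>z. f z + g z) \<le> loc_holder_norm K \<eta> f + loc_holder_norm K \<eta> g"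
proof -
  have bf1: "bdd_above ((\<lambda>x. norm (f x)) ` cball 0 K)" and bf2: "bdd_above (hrat \<eta> f ` hpairs K)"
    and bg1: "bdd_above ((\<lambda>x. norm (g x)) ` cball 0 K)" and bg2: "bdd_above (hrat \<eta> g ` hpairs K)"
    using assms unfolding hb_def by auto
  have n1: "norm (f x + g x) \<le> (SUP x\<in>cball 0 K. norm (f x)) + (SUP x\<in>cball 0 K. norm (g x))"
    if "x \<in> cball 0 K" for x
    using cSUP_upper[OF that bf1] cSUP_upper[OF that bg1] norm_triangle_ineq[of "f x" "g x"] by linarith
  have n2: "hrat \<eta> (\<lambda>z. f z + g z) xy \<le> (SUP xy\<in>hpairs K. hrat \<eta> f xy) + (SUP xy\<in>hpairs K. hrat \<eta> g xy)"
    if "xy \<in> hpairs K" for xy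
  proof -
    have "hrat \<eta> (\<lambda>z. f z + g z) xy \<le> hrat \<eta> f xy + hrat \<eta> g xy"
    proof -
      have "norm (f (fst xy) + g (fst xy) - (f (snd xy) + g (snd xy))) \<le>
            norm (f (fst xy) - f (snd xy)) + norm (g (fst xy) - g (snd xy))"
        by (metis add_diff_add norm_triangle_ineq)
      then show ?thesis unfolding hrat_def by (simp add: add_divide_distrib[symmetric] divide_right_mono)
    qed
    then show ?thesis using cSUP_upper[OF that bf2] cSUP_upper[OF that bg2] by linarith
  qed
  show "hb K \<eta> (\<lambda>z. f z + g z)" unfolding hb_def bdd_above_def using n1 n2 by blast
  show "loc_holder_norm K \<eta> (\<lambda>z. f z + g z) \<le> loc_holder_norm K \<eta> f + loc_holder_norm K \<eta> g"
  proof -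
    have "(SUP x\<in>cball 0 K. norm (f x + g x)) \<le> (SUP x\<in>cball 0 K. norm (f x)) + (SUP x\<in>cball 0 K. norm (g x))"
      using assms(3) n1 by (intro cSUP_least) auto
    moreover have "(SUP xy\<in>hpairs K. hrat \<eta> (\<lambda>z. f z + g z) xy) \<le> (SUP xy\<in>hpairs K. hrat \<eta> f xy) + (SUP xy\<in>hpairs K. hrat \<eta> g xy)"
      using hpairs_ne[OF assms(3)] n2 by (intro cSUP_least) auto
    ultimately show ?thesis unfolding lhn_eq by simp
  qed
qed

lemma lhn_neg: fixes g :: "'a::euclidean_space \<Rightarrow> 'a" shows "loc_holder_norm K \<eta> (\<lambda>z. - g z) = loc_holder_norm K \<eta> g"
proof -
  have "hrat \<eta> (\<lambda>z. - g z) = hrat \<eta> g"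
  proof (rule ext)
    fix xy :: "'a \<times> 'a"
    have "- g (fst xy) - - g (snd xy) = - (g (fst xy) - g (snd xy))" by simp
    then show "hrat \<eta> (\<lambda>z. - g z) xy = hrat \<eta> g xy" unfolding hrat_def by (metis norm_minus_cancel)
  qed
  then show ?thesis unfolding lhn_eq by simp
qed

lemma hb_neg: fixes g :: "'a::euclidean_space \<Rightarrow> 'a" shows "hb K \<eta> (\<lambda>z. - g z) = hb K \<eta> g"
proof -
  have "hrat \<eta> (\<lambda>z. - g z) = hrat \<eta> g"
  proof (rule ext)
    fix xy :: "'a \<times> 'a"
    have "- g (fst xy) - - g (snd xy) = - (g (fst xy) - g (snd xy))" by simp
    then show "hrat \<eta> (\<lambda>z. - g z) xy = hrat \<eta> g xy" unfolding hrat_def by (metis norm_minus_cancel)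
  qed
  then show ?thesis unfolding hb_def by simp
qed

lemma lhn_zero: "K > 0 \<Longrightarrow> loc_holder_norm K \<eta> (\<lambda>z. 0 :: 'a::euclidean_space) = 0"
proof -
  assume K: "K > 0"
  have "cball (0::'a) K \<noteq> {}" using K by auto
  moreover have "hpairs K \<noteq> ({} :: ('a \<times> 'a) set)" using hpairs_ne[OF K] .
  moreover have "hrat \<eta> (\<lambda>z. 0::'a) = (\<lambda>_. 0)" unfolding hrat_def by auto
  ultimately show ?thesis unfolding lhn_eq by simp
qed


definition FA :: "(real \<Rightarrow> 'a::euclidean_space \<Rightarrow> 'a) \<Rightarrow> real \<Rightarrow> real \<Rightarrow> real \<Rightarrow> real \<Rightarrow> real" where
  "FA A K \<eta> s t = loc_holder_norm K \<eta> (\<lambda>z. A t z - A s z)"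

locale fam =
  fixes A :: "real \<Rightarrow> 'a::euclidean_space \<Rightarrow> 'a" and K \<eta> :: real
  assumes hA: "\<forall>t\<in>{0..1}. loc_holder \<eta> (A t)" and K: "K > 0" and eta: "\<eta> > 0"
begin

lemma FA_hb: "s \<in> {0..1} \<Longrightarrow> t \<in> {0..1} \<Longrightarrow> hb K \<eta> (\<lambda>z. A t z - A s z)"
  using hA K eta by (intro hb_loc loc_holder_diff) auto

lemma FA_nn: "s \<in> {0..1} \<Longrightarrow> t \<in> {0..1} \<Longrightarrow> 0 \<le> FA A K \<eta> s t"
  unfolding FA_def using lhn_props(1)[OF FA_hb K] by blast

lemma FA_refl: "FA A K \<eta> s s = 0"
  unfolding FA_def using lhn_zero[OF K] by simp

lemma FA_sym: "FA A K \<eta> s t = FA A K \<eta> t s"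
proof -
  have "(\<lambda>z. A t z - A s z) = (\<lambda>z. - (A s z - A t z))" by auto
  then show ?thesis unfolding FA_def using lhn_neg[of K \<eta> "\<lambda>z. A s z - A t z"] by simp
qed

lemma FA_tri: "s \<in> {0..1} \<Longrightarrow> t \<in> {0..1} \<Longrightarrow> u \<in> {0..1} \<Longrightarrow> FA A K \<eta> s u \<le> FA A K \<eta> s t + FA A K \<eta> t u"
proof -
  assume s: "s \<in> {0..1}" and t: "t \<in> {0..1}" and u: "u \<in> {0..1}"
  have "(\<lambda>z. A u z - A s z) = (\<lambda>z. (A u z - A t z) + (A t z - A s z))" by auto
  then show ?thesis unfolding FA_def
    using lhn_triangle(2)[OF FA_hb[OF t u] FA_hb[OF s t] K] by simp
qed

lemma FA_near:
  assumes hc: "\<forall>t\<in>{0..1}. ((\<lambda>s. loc_holder_norm K \<eta> (\<lambda>z. A s z - A t z)) \<longlongrightarrow> 0) (at t within {0..1})"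
    and s0: "s0 \<in> {0..1}" and e: "e > 0"
  shows "\<exists>d>0. \<forall>s\<in>{0..1}. \<bar>s - s0\<bar> < d \<longrightarrow> FA A K \<eta> s0 s < e"
proof -
  have "\<forall>\<^sub>F s in at s0 within {0..1}. dist (loc_holder_norm K \<eta> (\<lambda>z. A s z - A s0 z)) 0 < e"
    using hc s0 e unfolding tendsto_iff by blast
  then obtain d where d: "d > 0" "\<forall>s\<in>{0..1}. s \<noteq> s0 \<and> dist s s0 < d \<longrightarrow>
      dist (loc_holder_norm K \<eta> (\<lambda>z. A s z - A s0 z)) 0 < e"
    unfolding eventually_at by blast
  have "FA A K \<eta> s0 s < e" if "s \<in> {0..1}" "\<bar>s - s0\<bar> < d" for s
  proof (cases "s = s0")
    case True then show ?thesis using FA_refl e by simp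
  next
    case False
    then have "dist (FA A K \<eta> s0 s) 0 < e" using d that unfolding FA_def dist_real_def by auto
    then show ?thesis by (simp add: dist_real_def)
  qed
  then show ?thesis using d(1) by blast
qed

lemma FA_unif:
  assumes hc: "\<forall>t\<in>{0..1}. ((\<lambda>s. loc_holder_norm K \<eta> (\<lambda>z. A s z - A t z)) \<longlongrightarrow> 0) (at t within {0..1})"
  shows "\<forall>e>0. \<exists>d>0. \<forall>s\<in>{0..1}. \<forall>t\<in>{0..1}. \<bar>s - t\<bar> < d \<longrightarrow> FA A K \<eta> s t < e"
proof -
  let ?S = "{0..1::real} \<times> {0..1::real}"
  let ?G = "\<lambda>x. FA A K \<eta> (fst x) (snd x)"
  have cont: "continuous_on ?S ?G"
    unfolding continuous_on_iff
  proof (intro ballI allI impI)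
    fix x e assume x: "x \<in> ?S" and e: "(e::real) > 0"
    obtain s0 t0 where x0: "x = (s0, t0)" "s0 \<in> {0..1}" "t0 \<in> {0..1}" using x by auto
    obtain d1 where d1: "d1 > 0" "\<forall>s\<in>{0..1}. \<bar>s - s0\<bar> < d1 \<longrightarrow> FA A K \<eta> s0 s < e/2"
      using FA_near[OF hc x0(2), of "e/2"] e by auto
    obtain d2 where d2: "d2 > 0" "\<forall>s\<in>{0..1}. \<bar>s - t0\<bar> < d2 \<longrightarrow> FA A K \<eta> t0 s < e/2"
      using FA_near[OF hc x0(3), of "e/2"] e by auto
    show "\<exists>d>0. \<forall>x'\<in>?S. dist x' x < d \<longrightarrow> dist (?G x') (?G x) < e"
    proof (intro exI[of _ "min d1 d2"] conjI ballI impI)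
      show "min d1 d2 > 0" using d1 d2 by simp
      fix x' assume x': "x' \<in> ?S" and dx: "dist x' x < min d1 d2"
      obtain s t where xs: "x' = (s, t)" "s \<in> {0..1}" "t \<in> {0..1}" using x' by auto
      have "\<bar>s - s0\<bar> < d1" using dist_fst_le[of x' x] dx xs x0 by (simp add: dist_real_def)
      then have a1: "FA A K \<eta> s0 s < e/2" using d1 xs by auto
      have "\<bar>t - t0\<bar> < d2" using dist_snd_le[of x' x] dx xs x0 by (simp add: dist_real_def)
      then have a2: "FA A K \<eta> t0 t < e/2" using d2 xs by auto
      have i1: "FA A K \<eta> s t \<le> FA A K \<eta> s s0 + FA A K \<eta> s0 t0 + FA A K \<eta> t0 t"
        using FA_tri[of s s0 t] FA_tri[of s0 t0 t] xs x0 by auto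
      have i2: "FA A K \<eta> s0 t0 \<le> FA A K \<eta> s0 s + FA A K \<eta> s t + FA A K \<eta> t t0"
        using FA_tri[of s0 s t0] FA_tri[of s t t0] xs x0 by auto
      have "\<bar>FA A K \<eta> s t - FA A K \<eta> s0 t0\<bar> < e"
        using i1 i2 a1 a2 FA_sym[of s s0] FA_sym[of t t0] by linarith
      then show "dist (?G x') (?G x) < e" using xs x0 by (simp add: dist_real_def)
    qed
  qed
  have "uniformly_continuous_on ?S ?G"
    by (rule compact_uniformly_continuous[OF cont]) (intro compact_Times compact_Icc)
  then have uc: "\<forall>e>0. \<exists>d>0. \<forall>x\<in>?S. \<forall>x'\<in>?S. dist x' x < d \<longrightarrow> dist (?G x') (?G x) < e"
    unfolding uniformly_continuous_on_def .
  show ?thesis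
  proof (intro allI impI)
    fix e :: real assume e: "e > 0"
    obtain d where d: "d > 0" "\<forall>x\<in>?S. \<forall>x'\<in>?S. dist x' x < d \<longrightarrow> dist (?G x') (?G x) < e"
      using uc e by blast
    have "FA A K \<eta> s t < e" if st: "s \<in> {0..1}" "t \<in> {0..1}" "\<bar>s - t\<bar> < d" for s t
    proof -
      have "dist (s, t) (t, t) < d" using st by (simp add: dist_Pair_Pair dist_real_def)
      then have "dist (?G (s, t)) (?G (t, t)) < e" using d st by auto
      then show ?thesis using FA_refl by (simp add: dist_real_def)
    qed
    then show "\<exists>d>0. \<forall>s\<in>{0..1}. \<forall>t\<in>{0..1}. \<bar>s - t\<bar> < d \<longrightarrow> FA A K \<eta> s t < e" using d(1) by blast
  qed
qed

end


lemma incr_bound: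
  fixes d :: "'b \<Rightarrow> 'b \<Rightarrow> real"
  assumes pb: "pbound d q a b f M" and "a \<le> x" "x \<le> y" "y \<le> b"
  shows "d (f y) (f x) powr q \<le> M"
proof -
  have "(\<Sum>i<1. d (f ((\<lambda>i. if i = 0 then x else y) (Suc i))) (f ((\<lambda>i. if i = 0 then x else y) i)) powr q) \<le> M"
    by (rule psums_sub_bound[OF pb assms(2-4)]) (use assms in auto)
  then show ?thesis by simp
qed

lemma pvar_upgrade:
  fixes d :: "'b \<Rightarrow> 'b \<Rightarrow> real" and a b q q' :: real
  assumes fp: "finite_pvar d q a b f" and q: "q > 0" "q < q'" and ab: "a \<le> b"
    and dnn: "\<And>x y. a \<le> x \<Longrightarrow> x \<le> y \<Longrightarrow> y \<le> b \<Longrightarrow> 0 \<le> d (f y) (f x)"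
    and unif: "\<And>e. e > 0 \<Longrightarrow> \<exists>\<delta>>0. \<forall>x y. a \<le> x \<and> x \<le> y \<and> y \<le> b \<and> y - x < \<delta> \<longrightarrow> d (f y) (f x) < e"
  shows "finite_pvar d q' a b f"
    and "\<And>\<epsilon>. \<epsilon> > 0 \<Longrightarrow> \<exists>\<delta>>0. \<forall>u v. a \<le> u \<and> u \<le> v \<and> v \<le> b \<and> v - u < \<delta> \<longrightarrow> pv d q' f u v \<le> \<epsilon>"
proof -
  obtain M where pb: "pbound d q a b f M" using fp unfolding finite_pvar_pbound by blast
  have M0: "0 \<le> M" using incr_bound[OF pb order_refl ab order_refl] by (meson order_trans powr_ge_zero)
  define E where "E = M powr (1/q)"
  have dE: "d (f y) (f x) \<le> E" if "a \<le> x" "x \<le> y" "y \<le> b" for x y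
  proof -
    have "(d (f y) (f x) powr q) powr (1/q) \<le> M powr (1/q)"
      using incr_bound[OF pb that] q by (intro powr_mono2) auto
    moreover have "(d (f y) (f x) powr q) powr (1/q) = d (f y) (f x)"
    proof -
      have "(d (f y) (f x) powr q) powr (1/q) = d (f y) (f x) powr 1" using q by (simp add: powr_powr)
      also have "\<dots> = d (f y) (f x)" using dnn[OF that] by (cases "d (f y) (f x) = 0") auto
      finally show ?thesis .
    qed
    ultimately show ?thesis unfolding E_def by simp
  qed
  have subb: "\<And>n t. t 0 = u \<Longrightarrow> t n = v \<Longrightarrow> \<forall>i<n. t i \<le> t (Suc i) \<Longrightarrow>
      (\<Sum>i<n. d (f (t (Suc i))) (f (t i)) powr q) \<le> M" if "a \<le> u" "u \<le> v" "v \<le> b" for u v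
    using psums_sub_bound[OF pb that] by blast
  show "finite_pvar d q' a b f"
    unfolding finite_pvar_def
  proof (intro exI allI impI)
    fix n t assume "t 0 = a \<and> t n = b \<and> (\<forall>i<n. t i \<le> t (Suc i))"
    then have tt: "t 0 = a" "t n = b" "\<forall>i<n. t i \<le> t (Suc i)" by auto
    show "(\<Sum>i<n. d (f (t (Suc i))) (f (t i)) powr q') \<le> M * E powr (q' - q)"
    proof (rule pv_trick[where d=d and f=f and q=q and M=M and u=a and v=b, OF subb[OF order_refl ab order_refl] _ _ tt])
      show "q \<le> q'" using q by simp
      fix x y assume "a \<le> x" "x \<le> y" "y \<le> b"
      then show "0 \<le> d (f y) (f x) \<and> d (f y) (f x) \<le> E" using dnn dE by auto
    qed
  qed
  fix \<epsilon> :: real assume \<epsilon>: "\<epsilon> > 0"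
  define e where "e = (\<epsilon> / (M + 1)) powr (1 / (q' - q))"
  have e0: "e > 0" unfolding e_def using \<epsilon> M0 by simp
  have ee: "e powr (q' - q) = \<epsilon> / (M + 1)" unfolding e_def using \<epsilon> M0 q by (simp add: powr_powr)
  obtain \<delta> where \<delta>: "\<delta> > 0" "\<forall>x y. a \<le> x \<and> x \<le> y \<and> y \<le> b \<and> y - x < \<delta> \<longrightarrow> d (f y) (f x) < e"
    using unif[OF e0] by blast
  show "\<exists>\<delta>>0. \<forall>u v. a \<le> u \<and> u \<le> v \<and> v \<le> b \<and> v - u < \<delta> \<longrightarrow> pv d q' f u v \<le> \<epsilon>"
  proof (intro exI[of _ \<delta>] conjI allI impI)
    show "\<delta> > 0" by (rule \<delta>(1))
    fix u v assume uv: "a \<le> u \<and> u \<le> v \<and> v \<le> b \<and> v - u < \<delta>"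
    have "pv d q' f u v \<le> M * e powr (q' - q)"
    proof (rule pv_least)
      show "u \<le> v" using uv by simp
      fix n t assume tt: "t 0 = u" "t n = v" "\<forall>i<n. t i \<le> t (Suc i)"
      show "(\<Sum>i<n. d (f (t (Suc i))) (f (t i)) powr q') \<le> M * e powr (q' - q)"
      proof (rule pv_trick[where d=d and f=f and q=q and M=M and u=u and v=v, OF subb[of u v] _ _ tt])
        show "a \<le> u" "u \<le> v" "v \<le> b" using uv by auto
        show "q \<le> q'" using q by simp
        fix x y assume xy: "u \<le> x" "x \<le> y" "y \<le> v"
        have r: "a \<le> x" "x \<le> y" "y \<le> b" "y - x < \<delta>" using xy uv by auto
        have "d (f y) (f x) < e" using \<delta>(2) r by blast
        then show "0 \<le> d (f y) (f x) \<and> d (f y) (f x) \<le> e" using dnn[OF r(1-3)] by simp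
      qed
    qed
    also have "\<dots> = M * (\<epsilon> / (M + 1))" unfolding ee ..
    also have "\<dots> \<le> \<epsilon>" using M0 \<epsilon> by (simp add: field_simps)
    finally show "pv d q' f u v \<le> \<epsilon>" .
  qed
qed


lemma young_ext:
  fixes x y l :: real
  assumes "0 \<le> x" "0 \<le> y" "0 < l" "l < 1"
  shows "x powr l * y powr (1 - l) \<le> l * x + (1 - l) * y"
proof (cases "x = 0 \<or> y = 0")
  case True then show ?thesis using assms by auto
next
  case False
  then show ?thesis using Youngs_inequality_0[of l "1 - l" x y] assms by auto
qed

lemma holder2:
  fixes a1 a2 b1 b2 l :: real
  assumes "0 \<le> a1" "0 \<le> a2" "0 \<le> b1" "0 \<le> b2" "0 < l" "l < 1"
  shows "a1 powr l * b1 powr (1 - l) + a2 powr l * b2 powr (1 - l) \<le> (a1 + a2) powr l * (b1 + b2) powr (1 - l)"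
proof (cases "a1 + a2 = 0 \<or> b1 + b2 = 0")
  case True
  then have "(a1 = 0 \<and> a2 = 0) \<or> (b1 = 0 \<and> b2 = 0)" using assms by auto
  then show ?thesis using assms by auto
next
  case False
  define S where "S = a1 + a2"
  define T where "T = b1 + b2"
  have S: "S > 0" and T: "T > 0" using False assms unfolding S_def T_def by auto
  have key: "a powr l * b powr (1 - l) \<le> S powr l * T powr (1 - l) * (l * (a / S) + (1 - l) * (b / T))"
    if "0 \<le> a" "0 \<le> b" for a b
  proof -
    have "a powr l * b powr (1 - l) = S powr l * T powr (1 - l) * ((a / S) powr l * (b / T) powr (1 - l))"
      using S T by (simp add: powr_divide field_simps)
    also have "\<dots> \<le> S powr l * T powr (1 - l) * (l * (a / S) + (1 - l) * (b / T))"
      using young_ext[of "a / S" "b / T" l] that S T assms(5,6) by (intro mult_left_mono) auto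
    finally show ?thesis .
  qed
  have "a1 powr l * b1 powr (1 - l) + a2 powr l * b2 powr (1 - l) \<le>
      S powr l * T powr (1 - l) * (l * (a1 / S) + (1 - l) * (b1 / T)) + S powr l * T powr (1 - l) * (l * (a2 / S) + (1 - l) * (b2 / T))"
    using key[of a1 b1] key[of a2 b2] assms by linarith
  also have "\<dots> = S powr l * T powr (1 - l) * (l * ((a1 + a2) / S) + (1 - l) * ((b1 + b2) / T))"
    by (simp add: algebra_simps add_divide_distrib)
  also have "\<dots> = S powr l * T powr (1 - l)" unfolding S_def T_def using S T unfolding S_def T_def by simp
  finally show ?thesis unfolding S_def T_def .
qed

lemma powr_inv_pow: fixes x q :: real shows "0 \<le> x \<Longrightarrow> q \<noteq> 0 \<Longrightarrow> (x powr q) powr (1 / q) = x"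
proof -
  assume x: "0 \<le> x" and q: "q \<noteq> 0"
  have "(x powr q) powr (1 / q) = x powr 1" using q by (simp add: powr_powr)
  also have "\<dots> = x" using x by (cases "x = 0") auto
  finally show ?thesis .
qed

lemma pv_mono_gen:
  assumes B: "\<And>u v. a \<le> u \<Longrightarrow> u \<le> v \<Longrightarrow> v \<le> b \<Longrightarrow> bdd_above (psums d q u v f)"
    and "a \<le> u" "u \<le> u'" "u' \<le> v'" "v' \<le> v" "v \<le> b"
  shows "pv d q f u' v' \<le> pv d q f u v"
proof -
  have "pv d q f u u' + pv d q f u' v \<le> pv d q f u v"
    using assms by (intro pv_super B) auto
  moreover have "pv d q f u' v' + pv d q f v' v \<le> pv d q f u' v"
    using assms by (intro pv_super B) auto
  moreover have "0 \<le> pv d q f u u'" "0 \<le> pv d q f v' v"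
    using assms by (intro pv_nn B; auto)+
  ultimately show ?thesis by linarith
qed

definition csew :: "real \<Rightarrow> real" where "csew \<theta> = 2 / (1 - 2 powr (1 - \<theta>))"


lemma dy_triv: "dy a a l = {a}"
  unfolding dy_def dpt_def by auto

context fam
begin

lemma young_est:
  fixes x :: "real \<Rightarrow> 'a" and a b p' \<zeta>' u v :: real
  defines "dA \<equiv> (\<lambda>g h. loc_holder_norm K \<eta> (\<lambda>z. g z - h z))"
  assumes ab: "0 \<le> a" "a \<le> b" "b \<le> 1"
    and pz: "p' > 0" "\<zeta>' > 0" and th: "1/p' + \<eta>/\<zeta>' > 1"
    and bA: "\<And>u v. a \<le> u \<Longrightarrow> u \<le> v \<Longrightarrow> v \<le> b \<Longrightarrow> bdd_above (psums dA p' u v A)"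
    and bx: "\<And>u v. a \<le> u \<Longrightarrow> u \<le> v \<Longrightarrow> v \<le> b \<Longrightarrow> bdd_above (psums dist \<zeta>' u v x)"
    and xK: "\<And>s. a \<le> s \<Longrightarrow> s \<le> b \<Longrightarrow> norm (x s) \<le> K"
    and small: "\<And>\<epsilon>. \<epsilon> > 0 \<Longrightarrow> \<exists>\<delta>>0. \<forall>u v. a \<le> u \<and> u \<le> v \<and> v \<le> b \<and> v - u < \<delta> \<longrightarrow>
        pv dA p' A u v \<le> \<epsilon> \<and> pv dist \<zeta>' x u v \<le> \<epsilon>"
    and hn: "\<And>t. a \<le> t \<Longrightarrow> t \<le> b \<Longrightarrow> has_nyi A x a t (x t - x a)"
    and uv: "a \<le> u" "u \<le> v" "v \<le> b"
  shows "norm (x v - x u - (A v (x u) - A u (x u))) \<le>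
     csew (1/p' + \<eta>/\<zeta>') * pv dA p' A u v powr (1/p') * pv dist \<zeta>' x u v powr (\<eta>/\<zeta>')"
proof -
  define \<theta> where "\<theta> = 1/p' + \<eta>/\<zeta>'"
  define l where "l = (1/p') / \<theta>"
  have th1: "\<theta> > 1" using th unfolding \<theta>_def .
  have ez: "\<eta>/\<zeta>' > 0" using eta pz by simp
  have l0: "0 < l" "l < 1"
  proof -
    have pos: "\<eta> * p' > 0" using eta pz by simp
    have leq: "l = \<zeta>' / (\<zeta>' + \<eta> * p')" unfolding l_def \<theta>_def using pz by (simp add: field_simps)
    show "0 < l" unfolding leq using pos pz by simp
    show "l < 1" unfolding leq using pos pz by simp
  qed
  have lth1: "l * \<theta> = 1/p'" unfolding l_def using th1 by simp
  have lth2: "(1 - l) * \<theta> = \<eta>/\<zeta>'"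
  proof -
    have "(1 - l) * \<theta> = \<theta> - l * \<theta>" by (simp add: algebra_simps)
    also have "\<dots> = \<eta>/\<zeta>'" unfolding lth1 unfolding \<theta>_def by simp
    finally show ?thesis .
  qed
  note lth = lth1 lth2
  define WA where "WA u v = pv dA p' A u v" for u v
  define Wx where "Wx u v = pv dist \<zeta>' x u v" for u v
  define \<omega> where "\<omega> u v = WA u v powr l * Wx u v powr (1 - l)" for u v
  define Xi where "Xi u v = A v (x u) - A u (x u)" for u v
  have WA_nn: "0 \<le> WA u v" if "a \<le> u" "u \<le> v" "v \<le> b" for u v
    unfolding WA_def using that by (intro pv_nn bA)
  have Wx_nn: "0 \<le> Wx u v" if "a \<le> u" "u \<le> v" "v \<le> b" for u v
    unfolding Wx_def using that by (intro pv_nn bx)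
  have WA_mono: "WA u' v' \<le> WA u v" if "a \<le> u" "u \<le> u'" "u' \<le> v'" "v' \<le> v" "v \<le> b" for u v u' v'
    unfolding WA_def by (rule pv_mono_gen[OF bA]) (use that in auto)
  have Wx_mono: "Wx u' v' \<le> Wx u v" if "a \<le> u" "u \<le> u'" "u' \<le> v'" "v' \<le> v" "v \<le> b" for u v u' v'
    unfolding Wx_def by (rule pv_mono_gen[OF bx]) (use that in auto)
  have om_th: "\<omega> u v powr \<theta> = WA u v powr (1/p') * Wx u v powr (\<eta>/\<zeta>')" if "a \<le> u" "u \<le> v" "v \<le> b" for u v
  proof -
    have "\<omega> u v powr \<theta> = (WA u v powr l) powr \<theta> * (Wx u v powr (1 - l)) powr \<theta>"
      unfolding \<omega>_def using WA_nn[OF that] Wx_nn[OF that] by (simp add: powr_mult)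
    also have "\<dots> = WA u v powr (1/p') * Wx u v powr (\<eta>/\<zeta>')"
      by (simp add: powr_powr lth)
    finally show ?thesis .
  qed
  have dA_eq: "dA (A t) (A s) = FA A K \<eta> s t" for s t unfolding dA_def FA_def ..
  interpret S: sewing Xi \<omega> a b \<theta>
  proof
    show "1 < \<theta>" by (rule th1)
    fix u v assume "a \<le> u" "u \<le> v" "v \<le> b"
    then show "0 \<le> \<omega> u v" unfolding \<omega>_def by simp
  next
    fix u m v assume h: "a \<le> u" "u \<le> m" "m \<le> v" "v \<le> b"
    have "\<omega> u m + \<omega> m v \<le> (WA u m + WA m v) powr l * (Wx u m + Wx m v) powr (1 - l)"
      unfolding \<omega>_def using h l0 by (intro holder2 WA_nn Wx_nn) auto
    also have "\<dots> \<le> WA u v powr l * Wx u v powr (1 - l)"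
    proof (intro mult_mono powr_mono2)
      show "WA u m + WA m v \<le> WA u v" unfolding WA_def using h by (intro pv_super bA) auto
      show "Wx u m + Wx m v \<le> Wx u v" unfolding Wx_def using h by (intro pv_super bx) auto
      show "0 \<le> WA u m + WA m v" using h WA_nn[of u m] WA_nn[of m v] by auto
      show "0 \<le> Wx u m + Wx m v" using h Wx_nn[of u m] Wx_nn[of m v] by auto
    qed (use l0 in auto)
    finally show "\<omega> u m + \<omega> m v \<le> \<omega> u v" unfolding \<omega>_def .
  next
    fix u m v assume h: "a \<le> u" "u \<le> m" "m \<le> v" "v \<le> b"
    have m01: "m \<in> {0..1}" "v \<in> {0..1}" using h ab by auto
    have E: "Xi u v - Xi u m - Xi m v = (\<lambda>z. A v z - A m z) (x u) - (\<lambda>z. A v z - A m z) (x m)"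
      unfolding Xi_def by (simp add: algebra_simps)
    have xu: "x u \<in> cball 0 K" and xm: "x m \<in> cball 0 K" using xK h by auto
    have hb: "hb K \<eta> (\<lambda>z. A v z - A m z)" using FA_hb[OF m01] .
    have H: "norm (Xi u v - Xi u m - Xi m v) \<le> dA (A v) (A m) * norm (x u - x m) powr \<eta>"
      unfolding E dA_def using lhn_props(3)[OF hb K xu xm] by simp
    have dnn: "0 \<le> dA (A v) (A m)" unfolding dA_def using lhn_props(1)[OF hb K] by simp
    have h1: "dA (A v) (A m) \<le> WA u v powr (1/p')"
    proof -
      have "dA (A v) (A m) powr p' \<le> WA m v" unfolding WA_def using h by (intro pv_incr bA) auto
      then have "(dA (A v) (A m) powr p') powr (1/p') \<le> WA m v powr (1/p')"
        using pz by (intro powr_mono2) auto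
      also have "\<dots> \<le> WA u v powr (1/p')"
        using pz h WA_mono[where u=u and v=v and u'=m and v'=v] WA_nn[of m v] by (intro powr_mono2) auto
      finally show ?thesis using powr_inv_pow[OF dnn, of p'] pz by simp
    qed
    have h2: "norm (x u - x m) powr \<eta> \<le> Wx u v powr (\<eta>/\<zeta>')"
    proof -
      have dd: "dist (x m) (x u) = norm (x u - x m)" by (simp add: dist_norm norm_minus_commute)
      have "dist (x m) (x u) powr \<zeta>' \<le> Wx u m" unfolding Wx_def using h by (intro pv_incr bx) auto
      then have "(norm (x u - x m) powr \<zeta>') powr (\<eta>/\<zeta>') \<le> Wx u m powr (\<eta>/\<zeta>')"
        unfolding dd using ez by (intro powr_mono2) auto
      also have "\<dots> \<le> Wx u v powr (\<eta>/\<zeta>')"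
        using ez h Wx_mono[where u=u and v=v and u'=u and v'=m] Wx_nn[of u m] by (intro powr_mono2) auto
      finally show ?thesis using pz by (simp add: powr_powr)
    qed
    have "norm (Xi u v - Xi u m - Xi m v) \<le> WA u v powr (1/p') * Wx u v powr (\<eta>/\<zeta>')"
      using H h1 h2 dnn by (meson mult_mono powr_ge_zero order_trans)
    then show "norm (Xi u v - Xi u m - Xi m v) \<le> \<omega> u v powr \<theta>" using om_th h by simp
  qed
  have Cs_eq0: "S.Cs = 2 / (1 - 2 powr (1 - \<theta>))" by (fact S.Cs_def)
  have Cs_eq: "S.Cs = csew (1/p' + \<eta>/\<zeta>')" unfolding csew_def \<theta>_def[symmetric] by (rule Cs_eq0)
  have om_mesh: "\<omega> s t \<le> \<epsilon>" if "a \<le> s" "s \<le> t" "t \<le> b" "WA s t \<le> \<epsilon>" "Wx s t \<le> \<epsilon>" for s t \<epsilon>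
  proof -
    have "\<omega> s t \<le> \<epsilon> powr l * \<epsilon> powr (1 - l)"
      unfolding \<omega>_def using that l0 WA_nn[of s t] Wx_nn[of s t] by (intro mult_mono powr_mono2) auto
    also have "\<dots> = \<epsilon> powr 1" by (simp add: powr_add[symmetric])
    also have "\<dots> = \<epsilon>" using that WA_nn[of s t] by (cases "\<epsilon> = 0") auto
    finally show ?thesis .
  qed
  have main: "norm (x v - x u - Xi u v) \<le> S.Cs * \<omega> u v powr \<theta>"
  proof (cases "u = v")
    case True
    then show ?thesis unfolding Xi_def using S.Cs_pos by simp
  next
    case False
    then have uv': "u < v" using uv by simp
    have av: "a < v" using uv uv' by simp
    show ?thesis
    proof (rule field_le_epsilon)
      fix e :: real assume e: "e > 0"
      define \<Omega> where "\<Omega> = \<omega> a b"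
      have \<Omega>0: "0 \<le> \<Omega>" unfolding \<Omega>_def using S.om_nn ab by simp
      have Cs0: "S.Cs > 0" by (rule S.Cs_pos)
      define c where "c = S.Cs * (\<Omega> + 1)"
      have c0: "c > 0" unfolding c_def using Cs0 \<Omega>0 by simp
      define y where "y = e / (4 * c)"
      have y0: "y > 0" unfolding y_def using e c0 by simp
      define \<epsilon> where "\<epsilon> = y powr (1 / (\<theta> - 1))"
      have \<epsilon>0: "\<epsilon> > 0" unfolding \<epsilon>_def using y0 by simp
      have \<epsilon>th: "\<epsilon> powr (\<theta> - 1) = y" unfolding \<epsilon>_def using y0 th1 by (simp add: powr_powr)
      obtain \<delta> where \<delta>: "\<delta> > 0" "\<forall>u v. a \<le> u \<and> u \<le> v \<and> v \<le> b \<and> v - u < \<delta> \<longrightarrow> WA u v \<le> \<epsilon> \<and> Wx u v \<le> \<epsilon>"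
        using small[OF \<epsilon>0] unfolding WA_def Wx_def by blast
      have LA: "(\<lambda>l. psum Xi (dy a v l)) \<longlonglongrightarrow> x v - x a"
        using hn[of v] uv unfolding has_nyi_def nyi_sum_psum[OF av] Xi_def by auto
      have LB: "(\<lambda>l. psum Xi (dy a u l)) \<longlonglongrightarrow> x u - x a"
      proof (cases "a = u")
        case True then show ?thesis by (simp add: dy_triv psum_single)
      next
        case False
        then have au: "a < u" using uv by simp
        then show ?thesis
          using hn[of u] uv unfolding has_nyi_def nyi_sum_psum[OF au] Xi_def by auto
      qed
      have LC: "(\<lambda>l. (v - a) * inverse (2 ^ l)) \<longlonglongrightarrow> 0"
        by (intro tendsto_mult_right_zero LIMSEQ_inverse_realpow_zero) simp
      have "\<forall>\<^sub>F l in sequentially. dist (psum Xi (dy a v l)) (x v - x a) < e/4"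
        using tendstoD[OF LA, of "e/4"] e by simp
      moreover have "\<forall>\<^sub>F l in sequentially. dist (psum Xi (dy a u l)) (x u - x a) < e/4"
        using tendstoD[OF LB, of "e/4"] e by simp
      moreover have "\<forall>\<^sub>F l in sequentially. (v - a) * inverse (2 ^ l) < \<delta>"
        using order_tendstoD(2)[OF LC \<delta>(1)] .
      ultimately have "\<forall>\<^sub>F l in sequentially. dist (psum Xi (dy a v l)) (x v - x a) < e/4 \<and>
          dist (psum Xi (dy a u l)) (x u - x a) < e/4 \<and> (v - a) * inverse (2 ^ l) < \<delta>"
        by (intro eventually_conj)
      then obtain n where n: "dist (psum Xi (dy a v n)) (x v - x a) < e/4"
          "dist (psum Xi (dy a u n)) (x u - x a) < e/4" "(v - a) * inverse (2 ^ n) < \<delta>"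
        unfolding eventually_sequentially by blast
      define P where "P = dy a v n"
      define Pu where "Pu = dy a u n"
      define Q where "Q = P \<union> Pu"
      define Q1 where "Q1 = {x\<in>Q. x \<le> u}"
      define Q2 where "Q2 = {x\<in>Q. u \<le> x}"
      have finQ: "finite Q" unfolding Q_def P_def Pu_def by (simp add: dy_fin)
      have Psub: "P \<subseteq> {a..v}" unfolding P_def using dy_sub uv by auto
      have Pusub: "Pu \<subseteq> {a..u}" unfolding Pu_def using dy_sub uv by auto
      have Qsub: "Q \<subseteq> {a..v}" unfolding Q_def using Psub Pusub uv by auto
      have uQ: "u \<in> Q" unfolding Q_def Pu_def using dy_ends by auto
      have vQ: "v \<in> Q" unfolding Q_def P_def using dy_ends by auto
      have aP: "a \<in> P" "v \<in> P" unfolding P_def using dy_ends by auto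
      have aPu: "a \<in> Pu" "u \<in> Pu" unfolding Pu_def using dy_ends by auto
      have cP: "\<forall>s t. consec P s t \<longrightarrow> \<omega> s t \<le> \<epsilon>"
      proof (intro allI impI)
        fix s t assume c: "consec P s t"
        have "t - s \<le> (v - a) / 2 ^ n" using dy_consec[OF av] c unfolding P_def by blast
        then have "t - s < \<delta>" using n(3) unfolding divide_inverse by linarith
        moreover have st: "s \<in> P" "t \<in> P" "s < t" using c unfolding consec_def by auto
        moreover have st2: "a \<le> s" "t \<le> b" using Psub st uv by auto
        ultimately have "WA s t \<le> \<epsilon> \<and> Wx s t \<le> \<epsilon>" using \<delta>(2) by auto
        then show "\<omega> s t \<le> \<epsilon>" using st st2 by (intro om_mesh) auto
      qed
      have cPu: "\<forall>s t. consec Pu s t \<longrightarrow> \<omega> s t \<le> \<epsilon>"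
      proof (intro allI impI)
        fix s t assume c: "consec Pu s t"
        show "\<omega> s t \<le> \<epsilon>"
        proof (cases "a = u")
          case True
          then show ?thesis using c dy_triv unfolding consec_def Pu_def by auto
        next
          case False
          then have au: "a < u" using uv by simp
          have "t - s \<le> (u - a) / 2 ^ n" using dy_consec[OF au] c unfolding Pu_def by blast
          also have "\<dots> \<le> (v - a) / 2 ^ n" using uv by (simp add: divide_right_mono)
          finally have "t - s < \<delta>" using n(3) unfolding divide_inverse by linarith
          moreover have st: "s \<in> Pu" "t \<in> Pu" "s < t" using c unfolding consec_def by auto
          moreover have st2: "a \<le> s" "t \<le> b" using Pusub st uv by auto
          ultimately have "WA s t \<le> \<epsilon> \<and> Wx s t \<le> \<epsilon>" using \<delta>(2) by auto
          then show "\<omega> s t \<le> \<epsilon>" using st st2 by (intro om_mesh) auto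
        qed
      qed
      have R1: "norm (psum Xi Q - psum Xi P) \<le> S.Cs * \<epsilon> powr (\<theta> - 1) * \<omega> a v"
        by (rule S.refine[OF finQ _ Qsub aP]) (use \<epsilon>0 cP uv ab in \<open>auto simp: Q_def\<close>)
      have R2: "norm (psum Xi Q1 - psum Xi Pu) \<le> S.Cs * \<epsilon> powr (\<theta> - 1) * \<omega> a u"
        by (rule S.refine[of Q1 Pu a u]) (use finQ Qsub Pusub \<epsilon>0 cPu uv ab aPu in \<open>auto simp: Q1_def Q_def\<close>)
      have R3: "norm (psum Xi Q2 - Xi u v) \<le> S.Cs * \<omega> u v powr \<theta>"
        by (rule S.maximal) (use finQ Qsub uQ vQ uv in \<open>auto simp: Q2_def\<close>)
      have split: "psum Xi Q = psum Xi Q1 + psum Xi Q2"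
        unfolding Q1_def Q2_def by (rule psum_split[OF finQ uQ])
      have "x v - x u - Xi u v = ((x v - x a) - psum Xi P) - ((x u - x a) - psum Xi Pu)
          + (psum Xi P - psum Xi Q) + (psum Xi Q1 - psum Xi Pu) + (psum Xi Q2 - Xi u v)"
        using split by (simp add: algebra_simps)
      then have "norm (x v - x u - Xi u v) \<le> norm ((x v - x a) - psum Xi P) + norm ((x u - x a) - psum Xi Pu)
          + norm (psum Xi P - psum Xi Q) + norm (psum Xi Q1 - psum Xi Pu) + norm (psum Xi Q2 - Xi u v)"
        by (metis (no_types, lifting) norm_triangle_le norm_triangle_ineq4 add_mono order_refl diff_conv_add_uminus
            norm_minus_cancel)
      moreover have "norm ((x v - x a) - psum Xi P) < e/4" using n(1) unfolding P_def by (simp add: dist_norm norm_minus_commute)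
      moreover have "norm ((x u - x a) - psum Xi Pu) < e/4" using n(2) unfolding Pu_def by (simp add: dist_norm norm_minus_commute)
      moreover have "norm (psum Xi P - psum Xi Q) = norm (psum Xi Q - psum Xi P)" by (rule norm_minus_commute)
      moreover have "S.Cs * \<epsilon> powr (\<theta> - 1) * \<omega> a v + S.Cs * \<epsilon> powr (\<theta> - 1) * \<omega> a u \<le> e/2"
      proof -
        have "\<omega> a v \<le> \<Omega>" "\<omega> a u \<le> \<Omega>" unfolding \<Omega>_def using S.om_mono uv ab by auto
        then have "\<omega> a v + \<omega> a u \<le> 2 * (\<Omega> + 1)" by simp
        then have "S.Cs * y * (\<omega> a v + \<omega> a u) \<le> S.Cs * y * (2 * (\<Omega> + 1))"
          using Cs0 y0 by (intro mult_left_mono) auto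
        also have "\<dots> = 2 * c * y" unfolding c_def by (simp add: algebra_simps)
        also have "\<dots> = e / 2" unfolding y_def using c0 by (simp add: field_simps)
        finally show ?thesis unfolding \<epsilon>th by (simp add: algebra_simps)
      qed
      ultimately show "norm (x v - x u - Xi u v) \<le> S.Cs * \<omega> u v powr \<theta> + e"
        using R1 R2 R3 by linarith
    qed
  qed
  show ?thesis using main om_th[OF uv] Cs_eq unfolding Xi_def WA_def Wx_def \<theta>_def
    by (simp add: mult.assoc)
qed

end


lemma csew_pos: "\<theta> > 1 \<Longrightarrow> csew \<theta> > 0"
proof -
  assume th: "\<theta> > 1"
  have "2 powr (1 - \<theta>) < 2 powr 0" using th by (intro powr_less_mono) auto
  then show ?thesis unfolding csew_def by simp
qed

lemma powr_subadd:
  fixes x y \<beta> :: real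
  assumes "0 \<le> x" "0 \<le> y" "0 < \<beta>" "\<beta> \<le> 1"
  shows "(x + y) powr \<beta> \<le> x powr \<beta> + y powr \<beta>"
proof (cases "x + y = 0")
  case True then show ?thesis using assms by simp
next
  case False
  then have s: "x + y > 0" using assms by simp
  have k: "z * (x + y) powr (\<beta> - 1) \<le> z powr \<beta>" if "0 \<le> z" "z \<le> x + y" for z
  proof (cases "z = 0")
    case True then show ?thesis by simp
  next
    case False
    then have z: "z > 0" using that by simp
    have "(x + y) powr (\<beta> - 1) \<le> z powr (\<beta> - 1)"
      using z that assms by (intro powr_mono2') auto
    then have "z * (x + y) powr (\<beta> - 1) \<le> z * z powr (\<beta> - 1)" using z by (intro mult_left_mono) auto
    also have "\<dots> = z powr \<beta>" using z by (simp add: powr_mult_base)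
    finally show ?thesis .
  qed
  have "(x + y) powr \<beta> = (x + y) * (x + y) powr (\<beta> - 1)" using s by (simp add: powr_mult_base)
  also have "\<dots> = x * (x + y) powr (\<beta> - 1) + y * (x + y) powr (\<beta> - 1)" by (simp add: algebra_simps)
  also have "\<dots> \<le> x powr \<beta> + y powr \<beta>" using k[of x] k[of y] assms by (intro add_mono) auto
  finally show ?thesis .
qed

context fam
begin

lemma apriori:
  fixes w :: "real \<Rightarrow> 'a" and a b p' r' C :: real
  defines "dA \<equiv> (\<lambda>g h. loc_holder_norm K \<eta> (\<lambda>z. g z - h z))"
  assumes ab: "0 \<le> a" "a \<le> b" "b \<le> 1" and pz: "p' > 0" and eta1: "\<eta> \<le> 1" and C: "C > 0"
    and bA: "\<And>u v. a \<le> u \<Longrightarrow> u \<le> v \<Longrightarrow> v \<le> b \<Longrightarrow> bdd_above (psums dA p' u v A)"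
    and bw: "\<And>u v. a \<le> u \<Longrightarrow> u \<le> v \<Longrightarrow> v \<le> b \<Longrightarrow> bdd_above (psums dist p' u v w)"
    and wK: "\<And>s. a \<le> s \<Longrightarrow> s \<le> b \<Longrightarrow> norm (w s) \<le> K"
    and hY: "\<And>u v. a \<le> u \<Longrightarrow> u \<le> v \<Longrightarrow> v \<le> b \<Longrightarrow> norm (w v - w u - (A v (w u) - A u (w u))) \<le>
        C * pv dA p' A u v powr (1/p') * pv dist p' w u v powr (\<eta>/p')"
    and r': "a \<le> r'" "r' \<le> b"
    and sm: "C * pv dA p' A a r' powr (1/p') \<le> 1/2"
  shows "pv dist p' w a r' powr (1/p') \<le> (2 + C) * pv dA p' A a r' powr (1/p')"
proof -
  define WA where "WA u v = pv dA p' A u v" for u v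
  define Ww where "Ww u v = pv dist p' w u v" for u v
  define X where "X = Ww a r' powr (1/p')"
  define \<alpha> where "\<alpha> = WA a r' powr (1/p')"
  define B where "B = 1 + C * X powr \<eta>"
  have B0: "B \<ge> 1" unfolding B_def using C by simp
  have WA_nn: "0 \<le> WA u v" if "a \<le> u" "u \<le> v" "v \<le> b" for u v
    unfolding WA_def using that by (intro pv_nn bA)
  have Ww_nn: "0 \<le> Ww u v" if "a \<le> u" "u \<le> v" "v \<le> b" for u v
    unfolding Ww_def using that by (intro pv_nn bw)
  have Ww_mono: "Ww u' v' \<le> Ww u v" if "a \<le> u" "u \<le> u'" "u' \<le> v'" "v' \<le> v" "v \<le> b" for u v u' v'
    unfolding Ww_def by (rule pv_mono_gen[OF bw]) (use that in auto)
  have inc: "dist (w v) (w u) powr p' \<le> WA u v * B powr p'" if uv: "a \<le> u" "u \<le> v" "v \<le> r'" for u v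
  proof -
    have uv': "a \<le> u" "u \<le> v" "v \<le> b" using uv r' by auto
    have u01: "u \<in> {0..1}" "v \<in> {0..1}" using uv' ab by auto
    have hb: "hb K \<eta> (\<lambda>z. A v z - A u z)" using FA_hb[OF u01] .
    have wu: "w u \<in> cball 0 K" using wK uv' by auto
    have dnn: "0 \<le> dA (A v) (A u)" unfolding dA_def using lhn_props(1)[OF hb K] by simp
    have n1: "norm (A v (w u) - A u (w u)) \<le> dA (A v) (A u)"
      unfolding dA_def using lhn_props(2)[OF hb K wu] by simp
    have n2: "dA (A v) (A u) \<le> WA u v powr (1/p')"
    proof -
      have "dA (A v) (A u) powr p' \<le> WA u v" unfolding WA_def using uv' by (intro pv_incr bA) auto
      then have "(dA (A v) (A u) powr p') powr (1/p') \<le> WA u v powr (1/p')"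
        using pz by (intro powr_mono2) auto
      then show ?thesis using powr_inv_pow[OF dnn, of p'] pz by simp
    qed
    have n3: "Ww u v powr (\<eta>/p') \<le> X powr \<eta>"
    proof -
      have "Ww u v powr (\<eta>/p') \<le> Ww a r' powr (\<eta>/p')"
        using eta pz uv' uv r' Ww_mono[where u=a and v=r' and u'=u and v'=v] Ww_nn[of u v]
        by (intro powr_mono2) auto
      also have "\<dots> = X powr \<eta>" unfolding X_def by (simp add: powr_powr)
      finally show ?thesis .
    qed
    have "dist (w v) (w u) \<le> norm (A v (w u) - A u (w u)) + norm (w v - w u - (A v (w u) - A u (w u)))"
      unfolding dist_norm by (metis add.commute diff_add_cancel norm_triangle_ineq)
    also have "\<dots> \<le> WA u v powr (1/p') + C * WA u v powr (1/p') * X powr \<eta>"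
    proof (rule add_mono)
      show "norm (A v (w u) - A u (w u)) \<le> WA u v powr (1/p')" using n1 n2 by simp
      have "norm (w v - w u - (A v (w u) - A u (w u))) \<le> C * WA u v powr (1/p') * Ww u v powr (\<eta>/p')"
        using hY[OF uv'] unfolding WA_def Ww_def dA_def .
      also have "\<dots> \<le> C * WA u v powr (1/p') * X powr \<eta>"
        using n3 C by (intro mult_left_mono) auto
      finally show "norm (w v - w u - (A v (w u) - A u (w u))) \<le> C * WA u v powr (1/p') * X powr \<eta>" .
    qed
    also have "\<dots> = WA u v powr (1/p') * B" unfolding B_def by (simp add: algebra_simps)
    finally have dd: "dist (w v) (w u) \<le> WA u v powr (1/p') * B" .
    have "dist (w v) (w u) powr p' \<le> (WA u v powr (1/p') * B) powr p'"
      using dd pz by (intro powr_mono2) auto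
    also have "\<dots> = (WA u v powr (1/p')) powr p' * B powr p'" using B0 by (simp add: powr_mult)
    also have "(WA u v powr (1/p')) powr p' = WA u v"
    proof -
      have "(WA u v powr (1/p')) powr p' = WA u v powr 1" using pz by (simp add: powr_powr)
      also have "\<dots> = WA u v" using WA_nn[OF uv'] by (cases "WA u v = 0") auto
      finally show ?thesis .
    qed
    finally show ?thesis .
  qed
  have WwB: "Ww a r' \<le> WA a r' * B powr p'"
    unfolding Ww_def
  proof (rule pv_least)
    show "a \<le> r'" using r' by simp
    fix n t assume tt: "t 0 = a" "t n = r'" "\<forall>i<n. t i \<le> t (Suc i)"
    have tb: "a \<le> t i \<and> t i \<le> r'" if "i \<le> n" for i using part_bounds[OF tt that] .
    have "(\<Sum>i<n. dist (w (t (Suc i))) (w (t i)) powr p') \<le> (\<Sum>i<n. WA (t i) (t (Suc i)) * B powr p')"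
      by (rule sum_mono) (use inc tb tt in auto)
    also have "\<dots> = (\<Sum>i<n. WA (t i) (t (Suc i))) * B powr p'" by (simp add: sum_distrib_right)
    also have "\<dots> \<le> WA (t 0) (t n) * B powr p'"
    proof (intro mult_right_mono super_sum[where a=a and b=r'])
      fix x y z assume "a \<le> x" "x \<le> y" "y \<le> z" "z \<le> r'"
      then show "WA x y + WA y z \<le> WA x z" unfolding WA_def using r' by (intro pv_super bA) auto
    next
      fix x assume "a \<le> x" "x \<le> r'"
      then show "0 \<le> WA x x" using WA_nn r' by auto
    qed (use tt tb in auto)
    finally show "(\<Sum>i<n. dist (w (t (Suc i))) (w (t i)) powr p') \<le> WA a r' * B powr p'" using tt by simp
  qed
  have XB: "X \<le> \<alpha> * B"
  proof -
    have "X \<le> (WA a r' * B powr p') powr (1/p')"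
      unfolding X_def using WwB pz Ww_nn[of a r'] r' ab by (intro powr_mono2) auto
    also have "\<dots> = \<alpha> * B"
    proof -
      have "(WA a r' * B powr p') powr (1/p') = WA a r' powr (1/p') * (B powr p') powr (1/p')"
        using WA_nn[of a r'] r' by (simp add: powr_mult)
      also have "(B powr p') powr (1/p') = B" using powr_inv_pow[of B p'] B0 pz by simp
      finally show ?thesis unfolding \<alpha>_def .
    qed
    finally show ?thesis .
  qed
  have X0: "0 \<le> X" unfolding X_def by simp
  have a0: "0 \<le> \<alpha>" unfolding \<alpha>_def by simp
  have sm': "C * \<alpha> \<le> 1/2" using sm unfolding \<alpha>_def WA_def .
  have "X \<le> (2 + C) * \<alpha>"
  proof (cases "X \<le> 1")
    case True
    then have "X powr \<eta> \<le> 1" using X0 eta powr_mono2[of \<eta> X 1] by simp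
    then have "B \<le> 1 + C" unfolding B_def using C by simp
    then have "X \<le> \<alpha> * (1 + C)" using XB a0 by (meson mult_left_mono order_trans)
    then show ?thesis using a0 by (simp add: algebra_simps)
  next
    case False
    then have X1: "X > 1" by simp
    have "X powr \<eta> \<le> X powr 1" using X1 eta1 by (intro powr_mono) auto
    then have "X powr \<eta> \<le> X" using X1 by simp
    then have "B \<le> 1 + C * X" unfolding B_def using C by simp
    then have "X \<le> \<alpha> * (1 + C * X)" using XB a0 by (meson mult_left_mono order_trans)
    also have "\<dots> = \<alpha> + (C * \<alpha>) * X" by (simp add: algebra_simps)
    also have "\<dots> \<le> \<alpha> + X / 2" using mult_right_mono[OF sm' X0] by simp
    finally have "X \<le> 2 * \<alpha>" by simp
    moreover have "0 \<le> C * \<alpha>" using C a0 by simp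
    ultimately show ?thesis by (simp add: algebra_simps)
  qed
  then show ?thesis unfolding X_def \<alpha>_def Ww_def WA_def .
qed

end


lemma path_unif:
  fixes f :: "real \<Rightarrow> 'a::metric_space"
  assumes "continuous_on {a..b} f" "e > 0"
  shows "\<exists>\<delta>>0. \<forall>x y. a \<le> x \<and> x \<le> y \<and> y \<le> b \<and> y - x < \<delta> \<longrightarrow> dist (f y) (f x) < e"
proof -
  have "uniformly_continuous_on {a..b} f" by (rule compact_uniformly_continuous[OF assms(1) compact_Icc])
  then obtain d where d: "d > 0" "\<forall>x\<in>{a..b}. \<forall>x'\<in>{a..b}. dist x' x < d \<longrightarrow> dist (f x') (f x) < e"
    unfolding uniformly_continuous_on_def using assms(2) by blast
  show ?thesis
  proof (intro exI[of _ d] conjI allI impI)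
    show "d > 0" by (rule d(1))
    fix x y assume "a \<le> x \<and> x \<le> y \<and> y \<le> b \<and> y - x < d"
    then show "dist (f y) (f x) < e" using d(2) by (auto simp: dist_real_def)
  qed
qed

lemma path_bounded:
  fixes f :: "real \<Rightarrow> 'a::real_normed_vector"
  assumes "continuous_on {a..b} f"
  shows "\<exists>M. \<forall>s\<in>{a..b}. norm (f s) \<le> M"
proof -
  have "bounded (f ` {a..b})" by (rule compact_imp_bounded[OF compact_continuous_image[OF assms compact_Icc]])
  then show ?thesis unfolding bounded_iff by auto
qed

context fam
begin

lemma w_step:
  fixes w :: "real \<Rightarrow> 'a" and p p' r r' :: real
  defines "dA \<equiv> (\<lambda>g h. loc_holder_norm K \<eta> (\<lambda>z. g z - h z))"
  assumes eta1: "\<eta> \<le> 1" and pp: "0 < p" "p < p'" and th2: "1/p' + \<eta>/p' > 1"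
    and fA: "finite_pvar dA p' 0 1 A"
    and smallA: "\<And>\<epsilon>. \<epsilon> > 0 \<Longrightarrow> \<exists>\<delta>>0. \<forall>u v. 0 \<le> u \<and> u \<le> v \<and> v \<le> 1 \<and> v - u < \<delta> \<longrightarrow> pv dA p' A u v \<le> \<epsilon>"
    and wp: "pvar_path p r 1 w" and r: "0 \<le> r" "r \<le> 1"
    and hn: "\<And>t. r \<le> t \<Longrightarrow> t \<le> 1 \<Longrightarrow> has_nyi A w r t (w t - w r)"
    and wK: "\<And>s. r \<le> s \<Longrightarrow> s \<le> 1 \<Longrightarrow> norm (w s) \<le> K"
    and r': "r \<le> r'" "r' \<le> 1"
    and sm: "csew (1/p' + \<eta>/p') * pv dA p' A r r' powr (1/p') \<le> 1/2"
  shows "norm (w r' - w r - (A r' (w r) - A r (w r))) \<le>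
    csew (1/p' + \<eta>/p') * pv dA p' A r r' powr (1/p') * ((2 + csew (1/p' + \<eta>/p')) * pv dA p' A r r' powr (1/p')) powr \<eta>"
proof -
  define C where "C = csew (1/p' + \<eta>/p')"
  have C0: "C > 0" unfolding C_def using csew_pos th2 by simp
  have wc: "continuous_on {r..1} w" and wf: "finite_pvar dist p r 1 w" using wp unfolding pvar_path_def by auto
  have wup: "finite_pvar dist p' r 1 w"
    "\<And>\<epsilon>. \<epsilon> > 0 \<Longrightarrow> \<exists>\<delta>>0. \<forall>u v. r \<le> u \<and> u \<le> v \<and> v \<le> 1 \<and> v - u < \<delta> \<longrightarrow> pv dist p' w u v \<le> \<epsilon>"
    using pvar_upgrade[OF wf pp r(2)] path_unif[OF wc] by auto
  have bA: "bdd_above (psums dA p' u v A)" if "r \<le> u" "u \<le> v" "v \<le> 1" for u v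
    using finite_pvar_bdd[OF fA] that r by auto
  have bw: "bdd_above (psums dist p' u v w)" if "r \<le> u" "u \<le> v" "v \<le> 1" for u v
    using finite_pvar_bdd[OF wup(1)] that by auto
  have small: "\<exists>\<delta>>0. \<forall>u v. r \<le> u \<and> u \<le> v \<and> v \<le> 1 \<and> v - u < \<delta> \<longrightarrow> pv dA p' A u v \<le> \<epsilon> \<and> pv dist p' w u v \<le> \<epsilon>"
    if e: "\<epsilon> > 0" for \<epsilon>
  proof -
    obtain d1 where d1: "d1 > 0" "\<forall>u v. 0 \<le> u \<and> u \<le> v \<and> v \<le> 1 \<and> v - u < d1 \<longrightarrow> pv dA p' A u v \<le> \<epsilon>"
      using smallA[OF e] by blast
    obtain d2 where d2: "d2 > 0" "\<forall>u v. r \<le> u \<and> u \<le> v \<and> v \<le> 1 \<and> v - u < d2 \<longrightarrow> pv dist p' w u v \<le> \<epsilon>"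
      using wup(2)[OF e] by blast
    show ?thesis using d1 d2 r by (intro exI[of _ "min d1 d2"]) auto
  qed
  have pz: "p' > 0" using pp by simp
  have Y: "norm (w v - w u - (A v (w u) - A u (w u))) \<le> C * pv dA p' A u v powr (1/p') * pv dist p' w u v powr (\<eta>/p')"
    if "r \<le> u" "u \<le> v" "v \<le> 1" for u v
    unfolding C_def dA_def
    by (rule young_est[OF r order_refl pz pz th2 bA[unfolded dA_def] bw wK small[unfolded dA_def] hn that])
  have X: "pv dist p' w r r' powr (1/p') \<le> (2 + C) * pv dA p' A r r' powr (1/p')"
    unfolding dA_def
    by (rule apriori[OF r order_refl pz eta1 C0 bA[unfolded dA_def] bw wK Y[unfolded dA_def] r' sm[unfolded C_def[symmetric] dA_def]])
  have "norm (w r' - w r - (A r' (w r) - A r (w r))) \<le> C * pv dA p' A r r' powr (1/p') * pv dist p' w r r' powr (\<eta>/p')"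
    using Y[of r r'] r' by simp
  also have "pv dist p' w r r' powr (\<eta>/p') = (pv dist p' w r r' powr (1/p')) powr \<eta>" by (simp add: powr_powr)
  also have "C * pv dA p' A r r' powr (1/p') * \<dots> \<le> C * pv dA p' A r r' powr (1/p') * ((2 + C) * pv dA p' A r r' powr (1/p')) powr \<eta>"
    using X eta C0 by (intro mult_left_mono powr_mono2) auto
  finally show ?thesis unfolding C_def .
qed

end


lemma sf_refl:
  assumes sf: "is_semiflow p A \<Psi>" and s: "0 \<le> s" "s \<le> 1"
  shows "\<Psi> s s x = x"
proof -
  have "has_nyi A (\<lambda>r. \<Psi> s r x) s s (\<Psi> s s x - x)" using sf s unfolding is_semiflow_def by auto
  then have "(\<lambda>l. nyi_sum A (\<lambda>r. \<Psi> s r x) s s l) \<longlonglongrightarrow> \<Psi> s s x - x" unfolding has_nyi_def .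
  then have "(\<lambda>l. 0) \<longlonglongrightarrow> \<Psi> s s x - x" by (simp add: nyi_sum_triv)
  then have "\<Psi> s s x - x = 0" using LIMSEQ_unique[OF _ tendsto_const] by metis
  then show ?thesis by simp
qed

lemma exps:
  fixes p \<zeta> \<eta> :: real
  assumes "0 < \<eta>" "1 \<le> p" "1 \<le> \<zeta>" "(1+\<eta>)/p > 1" "1/p + \<eta>/\<zeta> > 1"
  obtains p' \<zeta>' where "p < p'" "\<zeta> < \<zeta>'" "1/p' + \<eta>/\<zeta>' > 1" "1/p' + \<eta>/p' > 1"
proof -
  have c1: "((\<lambda>e. 1/(p+e) + \<eta>/(\<zeta>+e)) \<longlongrightarrow> 1/(p+0) + \<eta>/(\<zeta>+0)) (at_right 0)"
    using assms by (intro tendsto_intros) auto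
  have c2: "((\<lambda>e. 1/(p+e) + \<eta>/(p+e)) \<longlongrightarrow> 1/(p+0) + \<eta>/(p+0)) (at_right 0)"
    using assms by (intro tendsto_intros) auto
  have g2: "1/p + \<eta>/p > 1" using assms(4) by (simp add: add_divide_distrib)
  have "\<forall>\<^sub>F e in at_right 0. 1 < 1/(p+e) + \<eta>/(\<zeta>+e)" using order_tendstoD(1)[OF c1] assms(5) by simp
  moreover have "\<forall>\<^sub>F e in at_right 0. 1 < 1/(p+e) + \<eta>/(p+e)" using order_tendstoD(1)[OF c2] g2 by simp
  ultimately have "\<forall>\<^sub>F e in at_right 0. 1 < 1/(p+e) + \<eta>/(\<zeta>+e) \<and> 1 < 1/(p+e) + \<eta>/(p+e)"
    by (rule eventually_conj)
  then obtain b where b: "b > 0" "\<forall>e>0. e < b \<longrightarrow> 1 < 1/(p+e) + \<eta>/(\<zeta>+e) \<and> 1 < 1/(p+e) + \<eta>/(p+e)"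
    unfolding eventually_at_right_field by auto
  define e where "e = b / 2"
  have "e > 0" "e < b" using b unfolding e_def by auto
  then show ?thesis using b that[of "p + e" "\<zeta> + e"] by auto
qed

lemma psi_bound:
  fixes \<Psi> :: "real \<Rightarrow> real \<Rightarrow> 'a::euclidean_space \<Rightarrow> 'a"
  assumes sf: "is_semiflow p A \<Psi>" and hol: "semiflow_loc_holder (1/2) \<Psi>" and R: "0 \<le> R"
  obtains K where "K > 0" "R \<le> K" "\<And>s u x. 0 \<le> s \<Longrightarrow> s \<le> u \<Longrightarrow> u \<le> 1 \<Longrightarrow> norm x \<le> R \<Longrightarrow> norm (\<Psi> s u x) \<le> K"
proof -
  have "pvar_path p 0 1 (\<lambda>t. \<Psi> 0 t 0)" using sf unfolding is_semiflow_def by auto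
  then have "continuous_on {0..1} (\<lambda>t. \<Psi> 0 t 0)" unfolding pvar_path_def by auto
  then obtain M0 where M0: "\<forall>u\<in>{0..1}. norm (\<Psi> 0 u 0) \<le> M0" using path_bounded by blast
  have "norm (\<Psi> 0 0 0) \<le> M0" using M0 by auto
  then have M00: "0 \<le> M0" using norm_ge_zero[of "\<Psi> 0 0 0"] by linarith
  define R' where "R' = max R M0"
  obtain N where N: "\<forall>s t. 0 \<le> s \<and> s \<le> t \<and> t \<le> 1 \<longrightarrow>
      (\<forall>x\<in>cball 0 R'. \<forall>y\<in>cball 0 R'. norm (\<Psi> s t x - \<Psi> s t y) \<le> N * norm (x - y) powr (1/2))"
    using hol unfolding semiflow_loc_holder_def by blast
  define K where "K = M0 + \<bar>N\<bar> * (2 * R') powr (1/2) + R + 1"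
  have flow: "\<forall>s r t. 0 \<le> s \<and> s \<le> r \<and> r \<le> t \<and> t \<le> 1 \<longrightarrow> \<Psi> s t = \<Psi> r t \<circ> \<Psi> s r"
    using sf unfolding is_semiflow_def by auto
  have bd: "norm (\<Psi> s u x) \<le> K" if su: "0 \<le> s" "s \<le> u" "u \<le> 1" and x: "norm x \<le> R" for s u x
  proof -
    have "\<Psi> 0 u = \<Psi> s u \<circ> \<Psi> 0 s" using flow su by blast
    then have e: "\<Psi> 0 u 0 = \<Psi> s u (\<Psi> 0 s 0)" by (simp add: fun_eq_iff)
    have "norm (\<Psi> 0 s 0) \<le> M0" using M0 su by auto
    then have xs: "x \<in> cball 0 R'" "\<Psi> 0 s 0 \<in> cball 0 R'" using x unfolding R'_def by auto
    have "norm (\<Psi> s u x - \<Psi> s u (\<Psi> 0 s 0)) \<le> N * norm (x - \<Psi> 0 s 0) powr (1/2)"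
      using N su xs by blast
    also have "\<dots> \<le> \<bar>N\<bar> * norm (x - \<Psi> 0 s 0) powr (1/2)" by (intro mult_right_mono) auto
    also have "\<dots> \<le> \<bar>N\<bar> * (2 * R') powr (1/2)"
    proof (intro mult_left_mono powr_mono2)
      have "norm (x - \<Psi> 0 s 0) \<le> norm x + norm (\<Psi> 0 s 0)" by (rule norm_triangle_ineq4)
      then show "norm (x - \<Psi> 0 s 0) \<le> 2 * R'" using xs by simp
    qed auto
    finally have "norm (\<Psi> s u x - \<Psi> 0 u 0) \<le> \<bar>N\<bar> * (2 * R') powr (1/2)" using e by simp
    moreover have "norm (\<Psi> 0 u 0) \<le> M0" using M0 su by auto
    ultimately have "norm (\<Psi> s u x) \<le> M0 + \<bar>N\<bar> * (2 * R') powr (1/2)"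
      using norm_triangle_sub[of "\<Psi> s u x" "\<Psi> 0 u 0"] by linarith
    then show ?thesis unfolding K_def using R by simp
  qed
  have "K > 0" "R \<le> K" unfolding K_def using R M00 by (auto intro!: add_nonneg_pos add_nonneg_nonneg)
  then show ?thesis using that bd by blast
qed

lemma pow_le_eps:
  fixes x \<epsilon> \<gamma> :: real
  assumes "0 \<le> x" "x \<le> \<epsilon>" "\<gamma> \<ge> 1"
  shows "x powr \<gamma> \<le> \<epsilon> powr (\<gamma> - 1) * x"
proof -
  have "x powr \<gamma> = x powr ((\<gamma> - 1) + 1)" by simp
  also have "\<dots> = x powr (\<gamma> - 1) * x powr 1" by (rule powr_add)
  also have "x powr 1 = x" using assms by (cases "x = 0") auto
  also have "x powr (\<gamma> - 1) * x \<le> \<epsilon> powr (\<gamma> - 1) * x"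
    using assms by (intro mult_right_mono powr_mono2) auto
  finally show ?thesis .
qed

lemma term_bound:
  fixes a b C1 C2 p' \<zeta>' \<eta> \<beta> \<epsilon> :: real
  assumes ab: "0 \<le> a" "0 \<le> b" "a \<le> \<epsilon>" "b \<le> \<epsilon>" and pos: "p' > 0" "\<zeta>' > 0" "\<eta> > 0" "0 < \<beta>" "\<beta> \<le> 1"
    and C: "C1 \<ge> 0" "C2 \<ge> 0"
    and b1: "\<beta> * (1/p' + \<eta>/\<zeta>') > 1" and b2: "\<beta> * (1/p' + \<eta>/p') > 1"
  shows "(C1 * a powr (1/p') * b powr (\<eta>/\<zeta>') + C2 * a powr (1/p') * ((2 + C2) * a powr (1/p')) powr \<eta>) powr \<beta>
     \<le> C1 powr \<beta> * (2*\<epsilon>) powr (\<beta> * (1/p' + \<eta>/\<zeta>') - 1) * (a + b)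
       + (C2 * (2 + C2) powr \<eta>) powr \<beta> * \<epsilon> powr (\<beta> * (1/p' + \<eta>/p') - 1) * a"
proof -
  define m where "m = a + b"
  have m0: "0 \<le> m" "m \<le> 2 * \<epsilon>" unfolding m_def using ab by auto
  have t1: "C1 * a powr (1/p') * b powr (\<eta>/\<zeta>') \<le> C1 * m powr (1/p' + \<eta>/\<zeta>')"
  proof -
    have "a powr (1/p') * b powr (\<eta>/\<zeta>') \<le> m powr (1/p') * m powr (\<eta>/\<zeta>')"
      using ab pos unfolding m_def by (intro mult_mono powr_mono2) auto
    also have "\<dots> = m powr (1/p' + \<eta>/\<zeta>')" by (simp add: powr_add)
    finally show ?thesis using C by (simp add: mult.assoc mult_left_mono)
  qed
  have t2: "C2 * a powr (1/p') * ((2 + C2) * a powr (1/p')) powr \<eta> = C2 * (2 + C2) powr \<eta> * a powr (1/p' + \<eta>/p')"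
  proof -
    have "((2 + C2) * a powr (1/p')) powr \<eta> = (2 + C2) powr \<eta> * a powr (\<eta>/p')"
      using C by (simp add: powr_mult powr_powr)
    then show ?thesis by (simp add: powr_add)
  qed
  define X where "X = C1 * m powr (1/p' + \<eta>/\<zeta>')"
  define Y where "Y = C2 * (2 + C2) powr \<eta> * a powr (1/p' + \<eta>/p')"
  have X0: "0 \<le> X" "0 \<le> Y" unfolding X_def Y_def using C by auto
  have "(C1 * a powr (1/p') * b powr (\<eta>/\<zeta>') + C2 * a powr (1/p') * ((2 + C2) * a powr (1/p')) powr \<eta>) powr \<beta>
      \<le> (X + Y) powr \<beta>"
    unfolding t2 Y_def[symmetric] using t1 pos C ab X0 unfolding X_def[symmetric]
    by (intro powr_mono2) (auto intro!: add_nonneg_nonneg mult_nonneg_nonneg)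
  also have "\<dots> \<le> X powr \<beta> + Y powr \<beta>" using X0 pos by (intro powr_subadd) auto
  also have "X powr \<beta> = C1 powr \<beta> * m powr (\<beta> * (1/p' + \<eta>/\<zeta>'))"
    unfolding X_def using C m0 by (simp add: powr_mult powr_powr mult.commute)
  also have "\<dots> \<le> C1 powr \<beta> * ((2*\<epsilon>) powr (\<beta> * (1/p' + \<eta>/\<zeta>') - 1) * m)"
    using pow_le_eps[OF m0, of "\<beta> * (1/p' + \<eta>/\<zeta>')"] b1 by (intro mult_left_mono) auto
  also have "Y powr \<beta> = (C2 * (2 + C2) powr \<eta>) powr \<beta> * a powr (\<beta> * (1/p' + \<eta>/p'))"
    unfolding Y_def using C ab by (simp add: powr_mult powr_powr mult.commute)
  also have "\<dots> \<le> (C2 * (2 + C2) powr \<eta>) powr \<beta> * (\<epsilon> powr (\<beta> * (1/p' + \<eta>/p') - 1) * a)"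
    using pow_le_eps[OF ab(1,3), of "\<beta> * (1/p' + \<eta>/p')"] b2 by (intro mult_left_mono) auto
  finally show ?thesis unfolding m_def by (simp add: mult.assoc)
qed


lemma uniq:
  fixes A :: "real \<Rightarrow> 'a::euclidean_space \<Rightarrow> 'a"
    and \<Psi> :: "real \<Rightarrow> real \<Rightarrow> 'a \<Rightarrow> 'a"
    and \<eta> p S T t :: real and y :: 'a and z :: "real \<Rightarrow> 'a"
  assumes base: "0 < \<eta>" "\<eta> \<le> 1" "1 \<le> p" "(1 + \<eta>) / p > 1"
    and pf: "pvar_field p \<eta> A" and sf: "is_semiflow p A \<Psi>"
    and hol: "\<forall>\<beta>. 0 < \<beta> \<and> \<beta> < 1 \<longrightarrow> semiflow_loc_holder \<beta> \<Psi>"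
    and ST: "0 \<le> S" "S \<le> T" "T \<le> 1"
    and sol: "is_nyi_solution p \<eta> A S T y z"
    and t: "S \<le> t" "t \<le> T"
  shows "z t = \<Psi> S t y"
proof -
  obtain \<zeta> where \<zeta>: "\<zeta> \<ge> 1" "1/p + \<eta>/\<zeta> > 1" "pvar_path \<zeta> S T z"
    and hz: "\<forall>t\<in>{S..T}. has_nyi A z S t (z t - y)"
    using sol unfolding is_nyi_solution_def by blast
  have zc: "continuous_on {S..T} z" and zf: "finite_pvar dist \<zeta> S T z"
    using \<zeta>(3) unfolding pvar_path_def by auto
  have sfp: "\<And>s x. 0 \<le> s \<Longrightarrow> s \<le> 1 \<Longrightarrow> pvar_path p s 1 (\<lambda>t. \<Psi> s t x) \<and>
      (\<forall>t\<in>{s..1}. has_nyi A (\<lambda>r. \<Psi> s r x) s t (\<Psi> s t x - x))"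
    using sf unfolding is_semiflow_def by auto
  have flow: "\<forall>s r t. 0 \<le> s \<and> s \<le> r \<and> r \<le> t \<and> t \<le> 1 \<longrightarrow> \<Psi> s t = \<Psi> r t \<circ> \<Psi> s r"
    using sf unfolding is_semiflow_def by auto
  have hA: "\<forall>t\<in>{0..1}. loc_holder \<eta> (A t)" using pf unfolding pvar_field_def by auto
  have pfK: "\<And>K. K > 0 \<Longrightarrow> (\<forall>t\<in>{0..1}. ((\<lambda>s. loc_holder_norm K \<eta> (\<lambda>z. A s z - A t z)) \<longlongrightarrow> 0)
                                 (at t within {0..1})) \<and>
            finite_pvar (\<lambda>g h. loc_holder_norm K \<eta> (\<lambda>z. g z - h z)) p 0 1 A"
    using pf unfolding pvar_field_def by auto
  have zS: "z S = y"
  proof -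
    have "has_nyi A z S S (z S - y)" using hz ST by auto
    moreover have "nyi_sum A z S S = (\<lambda>l. 0)" by (rule ext) (simp add: nyi_sum_triv)
    ultimately have "(\<lambda>l. 0) \<longlonglongrightarrow> z S - y" unfolding has_nyi_def by simp
    then have "z S - y = 0" using LIMSEQ_unique[OF _ tendsto_const] by metis
    then show ?thesis by simp
  qed
  show ?thesis
  proof (cases "t = S")
    case True then show ?thesis using zS sf_refl[OF sf ST(1)] ST by simp
  next
    case False
    then have St: "S < t" using t by simp
    obtain p' \<zeta>' where ex: "p < p'" "\<zeta> < \<zeta>'" "1/p' + \<eta>/\<zeta>' > 1" "1/p' + \<eta>/p' > 1"
      using exps[OF base(1,3) \<zeta>(1) base(4) \<zeta>(2)] by blast
    define \<theta>1 where "\<theta>1 = 1/p' + \<eta>/\<zeta>'"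
    define \<theta>2 where "\<theta>2 = 1/p' + \<eta>/p'"
    have th1: "\<theta>1 > 1" and th2: "\<theta>2 > 1" using ex unfolding \<theta>1_def \<theta>2_def by auto
    define \<beta> where "\<beta> = (1 + max (1/\<theta>1) (1/\<theta>2)) / 2"
    have i1: "1/\<theta>1 < 1" "1/\<theta>2 < 1" "0 < 1/\<theta>1" using th1 th2 by auto
    have mx: "max (1/\<theta>1) (1/\<theta>2) < 1" using i1 by simp
    have mx2: "0 < max (1/\<theta>1) (1/\<theta>2)" using i1(3) max.cobounded1[of "1/\<theta>1" "1/\<theta>2"] by linarith
    have \<beta>: "0 < \<beta>" "\<beta> < 1" unfolding \<beta>_def using mx mx2 by auto
    have \<beta>1: "\<beta> * \<theta>1 > 1"
    proof -
      have "1/\<theta>1 < \<beta>" unfolding \<beta>_def using mx by auto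
      then show ?thesis using th1 by (simp add: field_simps)
    qed
    have \<beta>2: "\<beta> * \<theta>2 > 1"
    proof -
      have "1/\<theta>2 < \<beta>" unfolding \<beta>_def using mx by auto
      then show ?thesis using th2 by (simp add: field_simps)
    qed
    obtain Mz where Mz: "\<forall>s\<in>{S..T}. norm (z s) \<le> Mz" using path_bounded[OF zc] by blast
    define R where "R = max Mz 0"
    have R0: "0 \<le> R" unfolding R_def by simp
    have zR: "\<And>s. S \<le> s \<Longrightarrow> s \<le> T \<Longrightarrow> norm (z s) \<le> R" using Mz unfolding R_def by force
    have hol2: "semiflow_loc_holder (1/2) \<Psi>" using hol by simp
    obtain K where K: "K > 0" "R \<le> K"
      "\<And>s u x. 0 \<le> s \<Longrightarrow> s \<le> u \<Longrightarrow> u \<le> 1 \<Longrightarrow> norm x \<le> R \<Longrightarrow> norm (\<Psi> s u x) \<le> K"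
      using psi_bound[OF sf hol2 R0] by blast
    interpret F: fam A K \<eta> using hA K(1) base(1) by unfold_locales auto
    define dA :: "('a \<Rightarrow> 'a) \<Rightarrow> ('a \<Rightarrow> 'a) \<Rightarrow> real" where "dA = (\<lambda>g h. loc_holder_norm K \<eta> (\<lambda>z. g z - h z))"
    have fA: "finite_pvar dA p 0 1 A" and hcA: "\<forall>t\<in>{0..1}. ((\<lambda>s. loc_holder_norm K \<eta> (\<lambda>z. A s z - A t z)) \<longlongrightarrow> 0)
                                 (at t within {0..1})"
      using pfK[OF K(1)] unfolding dA_def by auto
    have dA_FA: "dA (A v) (A u) = FA A K \<eta> u v" for u v unfolding dA_def FA_def ..
    have unifA: "\<exists>\<delta>>0. \<forall>x y. 0 \<le> x \<and> x \<le> y \<and> y \<le> 1 \<and> y - x < \<delta> \<longrightarrow> dA (A y) (A x) < e" if e: "e > 0" for e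
    proof -
      obtain d where d: "d > 0" "\<forall>s\<in>{0..1}. \<forall>t\<in>{0..1}. \<bar>s - t\<bar> < d \<longrightarrow> FA A K \<eta> s t < e"
        using F.FA_unif[OF hcA] e by blast
      show ?thesis using d unfolding dA_FA by (intro exI[of _ d]) auto
    qed
    have dAnn: "0 \<le> dA (A y) (A x)" if "0 \<le> x" "x \<le> y" "y \<le> 1" for x y
      unfolding dA_FA using F.FA_nn that by auto
    have p0: "p > 0" using base by simp
    have upA: "finite_pvar dA p' 0 1 A"
      "\<And>\<epsilon>. \<epsilon> > 0 \<Longrightarrow> \<exists>\<delta>>0. \<forall>u v. 0 \<le> u \<and> u \<le> v \<and> v \<le> 1 \<and> v - u < \<delta> \<longrightarrow> pv dA p' A u v \<le> \<epsilon>"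
      using pvar_upgrade[where d=dA and q=p and a=0 and b=1 and f=A and q'=p'] fA p0 ex(1) dAnn unifA by auto
    have \<zeta>0: "\<zeta> > 0" using \<zeta> by simp
    have upz: "finite_pvar dist \<zeta>' S T z"
      "\<And>\<epsilon>. \<epsilon> > 0 \<Longrightarrow> \<exists>\<delta>>0. \<forall>u v. S \<le> u \<and> u \<le> v \<and> v \<le> T \<and> v - u < \<delta> \<longrightarrow> pv dist \<zeta>' z u v \<le> \<epsilon>"
      using pvar_upgrade[where d=dist and q=\<zeta> and a=S and b=T and f=z and q'=\<zeta>'] zf \<zeta>0 ex(2) ST(2) path_unif[OF zc] by auto
    define WA where "WA u v = pv dA p' A u v" for u v
    define Wz where "Wz u v = pv dist \<zeta>' z u v" for u v
    define C1 where "C1 = csew \<theta>1"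
    define C2 where "C2 = csew \<theta>2"
    have C1p: "C1 > 0" unfolding C1_def using csew_pos th1 by simp
    have C2p: "C2 > 0" unfolding C2_def using csew_pos th2 by simp
    have pp: "p' > 0" "\<zeta>' > 0" using ex p0 \<zeta>0 by auto
    have bA: "bdd_above (psums dA p' u v A)" if "0 \<le> u" "u \<le> v" "v \<le> 1" for u v
      using finite_pvar_bdd[OF upA(1)] that by auto
    have bz: "bdd_above (psums dist \<zeta>' u v z)" if "S \<le> u" "u \<le> v" "v \<le> T" for u v
      using finite_pvar_bdd[OF upz(1)] that by auto
    have Yz: "norm (z v - z u - (A v (z u) - A u (z u))) \<le> C1 * WA u v powr (1/p') * Wz u v powr (\<eta>/\<zeta>')"
      if "S \<le> u" "u \<le> v" "v \<le> T" for u v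
    proof -
      have sm: "\<exists>\<delta>>0. \<forall>u v. S \<le> u \<and> u \<le> v \<and> v \<le> T \<and> v - u < \<delta> \<longrightarrow>
          pv (\<lambda>g h. loc_holder_norm K \<eta> (\<lambda>z. g z - h z)) p' A u v \<le> \<epsilon> \<and> pv dist \<zeta>' z u v \<le> \<epsilon>"
        if e: "\<epsilon> > 0" for \<epsilon>
      proof -
        obtain d1 where d1: "d1 > 0" "\<forall>u v. 0 \<le> u \<and> u \<le> v \<and> v \<le> 1 \<and> v - u < d1 \<longrightarrow> pv dA p' A u v \<le> \<epsilon>"
          using upA(2)[OF e] by blast
        obtain d2 where d2: "d2 > 0" "\<forall>u v. S \<le> u \<and> u \<le> v \<and> v \<le> T \<and> v - u < d2 \<longrightarrow> pv dist \<zeta>' z u v \<le> \<epsilon>"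
          using upz(2)[OF e] by blast
        show ?thesis using d1 d2 ST unfolding dA_def by (intro exI[of _ "min d1 d2"]) auto
      qed
      have hn: "has_nyi A z S s (z s - z S)" if "S \<le> s" "s \<le> T" for s using hz that zS by auto
      have bA': "bdd_above (psums (\<lambda>g h. loc_holder_norm K \<eta> (\<lambda>z. g z - h z)) p' u v A)"
        if "S \<le> u" "u \<le> v" "v \<le> T" for u v using bA[of u v] that ST unfolding dA_def by auto
      show ?thesis
        using F.young_est[where x=z and a=S and b=T and p'=p' and \<zeta>'=\<zeta>' and u=u and v=v,
            OF ST pp ex(3) bA' bz zR[THEN order_trans, OF _ _ K(2)] sm hn that]
        unfolding WA_def Wz_def dA_def C1_def \<theta>1_def .
    qed
    have step: "norm (z r' - \<Psi> r r' (z r)) \<le> C1 * WA r r' powr (1/p') * Wz r r' powr (\<eta>/\<zeta>')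
        + C2 * WA r r' powr (1/p') * ((2 + C2) * WA r r' powr (1/p')) powr \<eta>"
      if rr: "S \<le> r" "r \<le> r'" "r' \<le> T" "C2 * WA r r' powr (1/p') \<le> 1/2" for r r'
    proof -
      define w where "w s = \<Psi> r s (z r)" for s
      have r01: "0 \<le> r" "r \<le> 1" using rr ST by auto
      have wr: "w r = z r" unfolding w_def using sf_refl[OF sf r01] .
      have wp: "pvar_path p r 1 w" and hnw: "\<forall>t\<in>{r..1}. has_nyi A w r t (\<Psi> r t (z r) - z r)"
        using sfp[OF r01, of "z r"] unfolding w_def by auto
      have hn: "has_nyi A w r s (w s - w r)" if "r \<le> s" "s \<le> 1" for s
        using hnw that wr unfolding w_def by auto
      have wK: "norm (w s) \<le> K" if "r \<le> s" "s \<le> 1" for s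
        unfolding w_def using K(3)[OF r01(1) that(1) that(2) zR[of r]] rr by auto
      have Ww: "norm (w r' - w r - (A r' (w r) - A r (w r))) \<le>
          C2 * WA r r' powr (1/p') * ((2 + C2) * WA r r' powr (1/p')) powr \<eta>"
        using F.w_step[where w=w and p=p and p'=p' and r=r and r'=r', OF base(2) p0 ex(1) ex(4)
          upA(1)[unfolded dA_def] upA(2)[unfolded dA_def] wp r01 hn wK _ _ rr(4)[unfolded C2_def \<theta>2_def WA_def dA_def]]
          rr ST unfolding C2_def \<theta>2_def WA_def dA_def by auto
      have Zz: "norm (z r' - z r - (A r' (z r) - A r (z r))) \<le> C1 * WA r r' powr (1/p') * Wz r r' powr (\<eta>/\<zeta>')"
        using Yz[of r r'] rr by auto
      have "z r' - \<Psi> r r' (z r) = (z r' - z r - (A r' (z r) - A r (z r))) - (w r' - w r - (A r' (w r) - A r (w r)))"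
        using wr unfolding w_def by simp
      then have "norm (z r' - \<Psi> r r' (z r)) \<le> norm (z r' - z r - (A r' (z r) - A r (z r))) + norm (w r' - w r - (A r' (w r) - A r (w r)))"
        by (metis norm_triangle_ineq4)
      then show ?thesis using Ww Zz by linarith
    qed
    have WA_nn: "0 \<le> WA u v" if "0 \<le> u" "u \<le> v" "v \<le> 1" for u v
      unfolding WA_def using that by (intro pv_nn bA)
    have Wz_nn: "0 \<le> Wz u v" if "S \<le> u" "u \<le> v" "v \<le> T" for u v
      unfolding Wz_def using that by (intro pv_nn bz)
    obtain N where N: "\<forall>s t. 0 \<le> s \<and> s \<le> t \<and> t \<le> 1 \<longrightarrow>
        (\<forall>x\<in>cball 0 K. \<forall>y\<in>cball 0 K. norm (\<Psi> s t x - \<Psi> s t y) \<le> N * norm (x - y) powr \<beta>)"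
      using hol \<beta> unfolding semiflow_loc_holder_def by blast
    define N' where "N' = \<bar>N\<bar>"
    define V where "V = WA S t + Wz S t"
    define W0 where "W0 = WA S t"
    define C3 where "C3 = C2 * (2 + C2) powr \<eta>"
    define Q where "Q \<epsilon> = N' * (C1 powr \<beta> * (2*\<epsilon>) powr (\<beta> * \<theta>1 - 1) * V + C3 powr \<beta> * \<epsilon> powr (\<beta> * \<theta>2 - 1) * W0)" for \<epsilon>
    have pw0: "((\<lambda>\<epsilon>. (c * \<epsilon>) powr \<gamma>) \<longlongrightarrow> 0) (at_right 0)" if "\<gamma> > 0" "c > 0" for c \<gamma> :: real
    proof (rule tendsto_zero_powrI)
      show "((\<lambda>\<epsilon>. c * \<epsilon>) \<longlongrightarrow> 0) (at_right 0)"
        by (intro tendsto_mult_right_zero tendsto_ident_at)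
      show "((\<lambda>\<epsilon>. \<gamma>) \<longlongrightarrow> \<gamma>) (at_right 0)" by simp
      show "\<forall>\<^sub>F \<epsilon> in at_right 0. 0 \<le> c * \<epsilon>"
        using eventually_at_right_less[of "0::real"] that by (auto elim: eventually_mono)
    qed (use that in auto)
    have Qlim: "(Q \<longlongrightarrow> 0) (at_right 0)"
    proof -
      have "((\<lambda>\<epsilon>. N' * (C1 powr \<beta> * (2*\<epsilon>) powr (\<beta> * \<theta>1 - 1) * V + C3 powr \<beta> * (1*\<epsilon>) powr (\<beta> * \<theta>2 - 1) * W0))
          \<longlongrightarrow> N' * (C1 powr \<beta> * 0 * V + C3 powr \<beta> * 0 * W0)) (at_right 0)"
        using \<beta>1 \<beta>2 by (intro tendsto_intros pw0) auto
      then show ?thesis unfolding Q_def by simp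
    qed
    have mlim: "((\<lambda>\<epsilon>. C2 * (1*\<epsilon>) powr (1/p')) \<longlongrightarrow> C2 * 0) (at_right 0)"
      using pp by (intro tendsto_intros pw0) auto
    have main: "norm (z t - \<Psi> S t y) \<le> e" if e: "e > 0" for e
    proof -
      have "\<forall>\<^sub>F \<epsilon> in at_right 0. Q \<epsilon> < e" using order_tendstoD(2)[OF Qlim e] .
      moreover have "\<forall>\<^sub>F \<epsilon> in at_right 0. C2 * \<epsilon> powr (1/p') < 1/2"
        using order_tendstoD(2)[OF mlim, of "1/2"] by simp
      ultimately have "\<forall>\<^sub>F \<epsilon> in at_right 0. Q \<epsilon> < e \<and> C2 * \<epsilon> powr (1/p') < 1/2" by (rule eventually_conj)
      then obtain b where b: "b > 0" "\<forall>\<epsilon>>0. \<epsilon> < b \<longrightarrow> Q \<epsilon> < e \<and> C2 * \<epsilon> powr (1/p') < 1/2"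
        unfolding eventually_at_right_field by auto
      define \<epsilon> where "\<epsilon> = b / 2"
      have \<epsilon>0: "\<epsilon> > 0" and Q\<epsilon>: "Q \<epsilon> < e" and m\<epsilon>: "C2 * \<epsilon> powr (1/p') < 1/2"
        using b unfolding \<epsilon>_def by auto
      obtain d1 where d1: "d1 > 0" "\<forall>u v. 0 \<le> u \<and> u \<le> v \<and> v \<le> 1 \<and> v - u < d1 \<longrightarrow> WA u v \<le> \<epsilon>"
        using upA(2)[OF \<epsilon>0] unfolding WA_def by blast
      obtain d2 where d2: "d2 > 0" "\<forall>u v. S \<le> u \<and> u \<le> v \<and> v \<le> T \<and> v - u < d2 \<longrightarrow> Wz u v \<le> \<epsilon>"
        using upz(2)[OF \<epsilon>0] unfolding Wz_def by blast
      define \<delta> where "\<delta> = min d1 d2"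
      have \<delta>0: "\<delta> > 0" unfolding \<delta>_def using d1 d2 by simp
      have LC: "(\<lambda>l. (t - S) * inverse (2 ^ l)) \<longlonglongrightarrow> 0"
        by (intro tendsto_mult_right_zero LIMSEQ_inverse_realpow_zero) simp
      obtain n where n: "(t - S) * inverse (2 ^ n) < \<delta>"
        using order_tendstoD(2)[OF LC \<delta>0] unfolding eventually_sequentially by auto
      define r where "r j = dpt S t n j" for j
      have r0: "r 0 = S" and rn: "r (2^n) = t" unfolding r_def by (simp_all add: dpt_0 dpt_last)
      have rin: "S \<le> r j \<and> r j \<le> t" if "j \<le> 2^n" for j
        using dpt_in[of S t j n] that St unfolding r_def by auto
      have rin01: "0 \<le> r j \<and> r j \<le> 1" if "j \<le> 2^n" for j
      proof -
        have "S \<le> r j \<and> r j \<le> t" using rin that by blast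
        then show ?thesis using ST t by linarith
      qed
      have rinST: "S \<le> r j \<and> r j \<le> T" if "j \<le> 2^n" for j
      proof -
        have "S \<le> r j \<and> r j \<le> t" using rin that by blast
        then show ?thesis using ST t by linarith
      qed
      have rmono: "r j \<le> r (Suc j)" for j unfolding r_def using dpt_mono[OF St, of j "Suc j" n] by simp
      have rstep: "r (Suc j) - r j < \<delta>" for j
        unfolding r_def dpt_step using n by (simp add: divide_inverse)
      define a where "a j = WA (r j) (r (Suc j))" for j
      define bb where "bb j = Wz (r j) (r (Suc j))" for j
      define g where "g j = \<Psi> (r j) t (z (r j))" for j
      have ab: "0 \<le> a j" "0 \<le> bb j" "a j \<le> \<epsilon>" "bb j \<le> \<epsilon>" if j: "j < 2^n" for j
      proof -
        have rj: "S \<le> r j" "r (Suc j) \<le> t" using rin[of j] rin[of "Suc j"] j by auto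
        show "0 \<le> a j" unfolding a_def using rj rmono[of j] ST t by (intro WA_nn) auto
        show "0 \<le> bb j" unfolding bb_def using rj rmono[of j] ST t by (intro Wz_nn) auto
        show "a j \<le> \<epsilon>" unfolding a_def using d1(2) rj rmono[of j] rstep[of j] ST t unfolding \<delta>_def by auto
        show "bb j \<le> \<epsilon>" unfolding bb_def using d2(2) rj rmono[of j] rstep[of j] ST t unfolding \<delta>_def by auto
      qed
      have tb: "norm (g (Suc j) - g j) \<le> N' * (C1 powr \<beta> * (2*\<epsilon>) powr (\<beta> * \<theta>1 - 1) * (a j + bb j)
          + C3 powr \<beta> * \<epsilon> powr (\<beta> * \<theta>2 - 1) * a j)" if j: "j < 2^n" for j
      proof -
        have rj: "S \<le> r j" "r j \<le> r (Suc j)" "r (Suc j) \<le> t" using rin[of j] rin[of "Suc j"] rmono[of j] j by auto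
        have sm: "C2 * WA (r j) (r (Suc j)) powr (1/p') \<le> 1/2"
        proof -
          have "WA (r j) (r (Suc j)) powr (1/p') \<le> \<epsilon> powr (1/p')"
            using ab[OF j] pp unfolding a_def by (intro powr_mono2) auto
          then show ?thesis using m\<epsilon> C2p by (smt (verit) mult_left_mono)
        qed
        have st: "norm (z (r (Suc j)) - \<Psi> (r j) (r (Suc j)) (z (r j))) \<le>
            C1 * a j powr (1/p') * bb j powr (\<eta>/\<zeta>') + C2 * a j powr (1/p') * ((2 + C2) * a j powr (1/p')) powr \<eta>"
          using step[OF rj(1,2) _ sm] rj t unfolding a_def bb_def by auto
        have fl: "\<Psi> (r j) t = \<Psi> (r (Suc j)) t \<circ> \<Psi> (r j) (r (Suc j))" using flow rj ST t by auto
        have g1: "g j = \<Psi> (r (Suc j)) t (\<Psi> (r j) (r (Suc j)) (z (r j)))" unfolding g_def using fl by simp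
        have x1: "z (r (Suc j)) \<in> cball 0 K" using zR[of "r (Suc j)"] rj t ST K(2) by auto
        have x2: "\<Psi> (r j) (r (Suc j)) (z (r j)) \<in> cball 0 K" using K(3)[of "r j" "r (Suc j)" "z (r j)"] zR[of "r j"] rj t ST by auto
        have "norm (g (Suc j) - g j) \<le> N * norm (z (r (Suc j)) - \<Psi> (r j) (r (Suc j)) (z (r j))) powr \<beta>"
          unfolding g1 unfolding g_def using N x1 x2 rj t ST by auto
        also have "\<dots> \<le> N' * norm (z (r (Suc j)) - \<Psi> (r j) (r (Suc j)) (z (r j))) powr \<beta>"
          unfolding N'_def by (intro mult_right_mono) auto
        also have "\<dots> \<le> N' * (C1 * a j powr (1/p') * bb j powr (\<eta>/\<zeta>') + C2 * a j powr (1/p') * ((2 + C2) * a j powr (1/p')) powr \<eta>) powr \<beta>"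
          unfolding N'_def using st \<beta> by (intro mult_left_mono powr_mono2) auto
        also have "\<dots> \<le> N' * (C1 powr \<beta> * (2*\<epsilon>) powr (\<beta> * \<theta>1 - 1) * (a j + bb j)
          + C3 powr \<beta> * \<epsilon> powr (\<beta> * \<theta>2 - 1) * a j)"
          unfolding N'_def C3_def \<theta>1_def \<theta>2_def
          using term_bound[OF ab[OF j] pp base(1) \<beta>(1) _ _ _ \<beta>1[unfolded \<theta>1_def] \<beta>2[unfolded \<theta>2_def]] C1p C2p \<beta>
          by (intro mult_left_mono) auto
        finally show ?thesis .
      qed
      have sumA: "(\<Sum>j<2^n. a j) \<le> W0"
      proof -
        have "(\<Sum>j<2^n. WA (r j) (r (Suc j))) \<le> WA (r 0) (r (2^n))"
        proof (rule super_sum[where a=0 and b=1])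
          fix x1 y1 z1 :: real assume "0 \<le> x1" "x1 \<le> y1" "y1 \<le> z1" "z1 \<le> 1"
          then show "WA x1 y1 + WA y1 z1 \<le> WA x1 z1" unfolding WA_def by (intro pv_super bA) auto
        next
          fix x :: real assume "0 \<le> x" "x \<le> 1" then show "0 \<le> WA x x" using WA_nn by auto
        qed (use rmono rin01 in auto)
        then show ?thesis unfolding a_def W0_def r0 rn .
      qed
      have sumB: "(\<Sum>j<2^n. bb j) \<le> Wz S t"
      proof -
        have "(\<Sum>j<2^n. Wz (r j) (r (Suc j))) \<le> Wz (r 0) (r (2^n))"
        proof (rule super_sum[where a=S and b=T])
          fix x1 y1 z1 :: real assume "S \<le> x1" "x1 \<le> y1" "y1 \<le> z1" "z1 \<le> T"
          then show "Wz x1 y1 + Wz y1 z1 \<le> Wz x1 z1" unfolding Wz_def by (intro pv_super bz) auto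
        next
          fix x :: real assume "S \<le> x" "x \<le> T" then show "0 \<le> Wz x x" using Wz_nn by auto
        qed (use rmono rinST in auto)
        then show ?thesis unfolding bb_def r0 rn .
      qed
      have gn: "g (2^n) = z t" unfolding g_def rn using sf_refl[OF sf] t ST by auto
      have g0: "g 0 = \<Psi> S t y" unfolding g_def r0 zS ..
      have "z t - \<Psi> S t y = (\<Sum>j<2^n. g (Suc j) - g j)" using sum_lessThan_telescope[of g "2^n"] gn g0 by simp
      then have "norm (z t - \<Psi> S t y) \<le> (\<Sum>j<2^n. norm (g (Suc j) - g j))" by (simp add: norm_sum)
      also have "\<dots> \<le> (\<Sum>j<2^n. N' * (C1 powr \<beta> * (2*\<epsilon>) powr (\<beta> * \<theta>1 - 1) * (a j + bb j)
          + C3 powr \<beta> * \<epsilon> powr (\<beta> * \<theta>2 - 1) * a j))"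
        by (rule sum_mono) (use tb in auto)
      also have "\<dots> = N' * (C1 powr \<beta> * (2*\<epsilon>) powr (\<beta> * \<theta>1 - 1) * ((\<Sum>j<2^n. a j) + (\<Sum>j<2^n. bb j))
          + C3 powr \<beta> * \<epsilon> powr (\<beta> * \<theta>2 - 1) * (\<Sum>j<2^n. a j))"
      proof -
        define k1 where "k1 = C1 powr \<beta> * (2*\<epsilon>) powr (\<beta> * \<theta>1 - 1)"
        define k2 where "k2 = C3 powr \<beta> * \<epsilon> powr (\<beta> * \<theta>2 - 1)"
        have "(\<Sum>j<2^n. N' * (k1 * (a j + bb j) + k2 * a j)) = N' * (\<Sum>j<2^n. k1 * (a j + bb j) + k2 * a j)"
          by (simp add: sum_distrib_left)
        also have "(\<Sum>j<2^n. k1 * (a j + bb j) + k2 * a j) = k1 * ((\<Sum>j<2^n. a j) + (\<Sum>j<2^n. bb j)) + k2 * (\<Sum>j<2^n. a j)"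
          by (simp add: sum.distrib sum_distrib_left[symmetric] distrib_left)
        finally show ?thesis unfolding k1_def k2_def .
      qed
      also have "\<dots> \<le> Q \<epsilon>"
        unfolding Q_def V_def
        using sumA sumB unfolding W0_def N'_def
        by (intro mult_left_mono add_mono) (auto intro!: mult_left_mono add_mono)
      finally show ?thesis using Q\<epsilon> by simp
    qed
    have "norm (z t - \<Psi> S t y) \<le> 0" using main by (rule field_le_epsilon) simp
    then show ?thesis by simp
  qed
qed


theorem lemma5p8:
  fixes A :: "real \<Rightarrow> 'a::euclidean_space \<Rightarrow> 'a"
    and \<Psi> :: "real \<Rightarrow> real \<Rightarrow> 'a \<Rightarrow> 'a"
    and \<eta> p :: real
  assumes "0 < \<eta>" "\<eta> \<le> 1" "1 \<le> p" "p < 2" "(1 + \<eta>) / p > 1"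
    and "pvar_field p \<eta> A"
    and "is_semiflow p A \<Psi>"
    and "\<forall>\<beta>. 0 < \<beta> \<and> \<beta> < 1 \<longrightarrow> semiflow_loc_holder \<beta> \<Psi>"
  shows "\<forall>S T y. 0 \<le> S \<and> S \<le> T \<and> T \<le> 1 \<longrightarrow>
           is_nyi_solution p \<eta> A S T y (\<lambda>t. \<Psi> S t y) \<and>
           (\<forall>z. is_nyi_solution p \<eta> A S T y z \<longrightarrow> (\<forall>t\<in>{S..T}. z t = \<Psi> S t y))"
proof (intro allI impI, rule conjI)
  fix S T :: real and y :: 'a
  assume ST: "0 \<le> S \<and> S \<le> T \<and> T \<le> 1"
  show "is_nyi_solution p \<eta> A S T y (\<lambda>t. \<Psi> S t y)"
  proof -
    have sfp: "pvar_path p S 1 (\<lambda>t. \<Psi> S t y)" "\<forall>t\<in>{S..1}. has_nyi A (\<lambda>r. \<Psi> S r y) S t (\<Psi> S t y - y)"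
      using assms(7) ST unfolding is_semiflow_def by auto
    have "continuous_on {S..T} (\<lambda>t. \<Psi> S t y)"
      using sfp(1) ST unfolding pvar_path_def by (auto elim: continuous_on_subset)
    moreover have "finite_pvar dist p S T (\<lambda>t. \<Psi> S t y)"
    proof -
      have f1: "finite_pvar dist p S 1 (\<lambda>t. \<Psi> S t y)" using sfp(1) unfolding pvar_path_def by simp
      have "S \<le> S" "S \<le> T" "T \<le> 1" using ST by auto
      then show ?thesis using finite_pvar_sub[OF f1] by blast
    qed
    ultimately have pp: "pvar_path p S T (\<lambda>t. \<Psi> S t y)" unfolding pvar_path_def by simp
    have th: "1/p + \<eta>/p > 1" using assms(5) by (simp add: add_divide_distrib)
    have hn: "\<forall>t\<in>{S..T}. has_nyi A (\<lambda>t. \<Psi> S t y) S t (\<Psi> S t y - y)"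
    proof
      fix t assume "t \<in> {S..T}"
      then have "t \<in> {S..1}" using ST by auto
      then show "has_nyi A (\<lambda>t. \<Psi> S t y) S t (\<Psi> S t y - y)" using sfp(2) by blast
    qed
    have "p \<ge> 1 \<and> 1/p + \<eta>/p > 1 \<and> pvar_path p S T (\<lambda>t. \<Psi> S t y) \<and>
        (\<forall>t\<in>{S..T}. has_nyi A (\<lambda>t. \<Psi> S t y) S t (\<Psi> S t y - y))"
      using assms(3) th pp hn by blast
    then show ?thesis unfolding is_nyi_solution_def by blast
  qed
  show "\<forall>z. is_nyi_solution p \<eta> A S T y z \<longrightarrow> (\<forall>t\<in>{S..T}. z t = \<Psi> S t y)"
  proof (intro allI impI ballI)
    fix z :: "real \<Rightarrow> 'a" and t :: real assume sol: "is_nyi_solution p \<eta> A S T y z" and t: "t \<in> {S..T}"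
    show "z t = \<Psi> S t y"
      by (rule uniq[OF assms(1,2,3,5,6,7,8) _ _ _ sol]) (use ST t in auto)
  qed
qed


end
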